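(* Let $G$ be an infinite group. Then (i) $Sc_G^{\wedge}=\operatorname{cl}\{\epsilon p: \epsilon\in G^*,\ \epsilon\epsilon=\epsilon,\ p\in\beta G\}$; (ii) $Sc_G^{\wedge}$ is an ideal of the semigroup $\beta G$, and $p\in Sc_G^{\wedge}$ if and only if every member of $p$ contains a piecewise shifted $FP$-set; (iii) $Sc_G^{\wedge}$ is the smallest closed ideal of $\beta G$ containing all idempotents of $G^*$.
   Context: $\beta G$ is the compact right topological semigroup of ultrafilters on discrete $G$ ($gp=\{gP:P\in p\}$; $pq$ generated by $\bigcup_{x\in P}xQ_x$, $P\in p$, $Q_x\in q$), $G^*$ the free ultrafilters, $X^*=\{p\in G^*:X\in p\}$. For $p\in G^*$, $\Delta_p(X)=\{gp:g\in G, X\in gp\}$. $A\subseteq G$ is scattered if for every infinite $X\subseteq A$ there is $p\in X^*$ with $\Delta_p(X)$ finite; $Sc_G$ is the ideal of scattered subsets, and $Sc_G^{\wedge}=\{p\in\beta G: G\setminus A\in p$ for each $A\in Sc_G\}$. Given an injective sequence $(g_n)$ and a sequence $(b_n)$ in $G$, the set $\{g_{i_1}\cdots g_{i_k}b_{i_k}: k\ge1, 0\le i_1<\dots<i_k<\omega\}$ is a piecewise shifted $FP$-set. *)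

theory Defs
  imports Main
begin

text \<open>The group G is the type 'a of class group_add; the (not necessarily
commutative) group operation is written +.  Ultrafilters on G are represented
as sets of subsets of G.\<close>

definition ultrafilter :: "'a set set \<Rightarrow> bool" where
  "ultrafilter U \<longleftrightarrow> {} \<notin> U \<and> UNIV \<in> U
     \<and> (\<forall>A B. A \<in> U \<and> A \<subseteq> B \<longrightarrow> B \<in> U)
     \<and> (\<forall>A B. A \<in> U \<and> B \<in> U \<longrightarrow> A \<inter> B \<in> U)
     \<and> (\<forall>A. A \<in> U \<or> - A \<in> U)"

definition betaG :: "'a set set set" where
  "betaG = {U. ultrafilter U}"

definition Gstar :: "'a set set set" where
  "Gstar = {U. ultrafilter U \<and> (\<forall>x. {x} \<notin> U)}"

definition Xstar :: "'a set \<Rightarrow> 'a set set set" where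
  "Xstar X = {p \<in> Gstar. X \<in> p}"

definition lshift :: "'a::group_add \<Rightarrow> 'a set set \<Rightarrow> 'a set set" where
  "lshift g p = (\<lambda>P. (\<lambda>x. g + x) ` P) ` p"

definition umult :: "'a::group_add set set \<Rightarrow> 'a set set \<Rightarrow> 'a set set" where
  "umult p q = {A. \<exists>P\<in>p. \<exists>Q. (\<forall>x\<in>P. Q x \<in> q) \<and> (\<Union>x\<in>P. (\<lambda>y. x + y) ` Q x) \<subseteq> A}"

text \<open>closure in beta G (topology generated by the basic clopen sets {p. A \<in> p})\<close>
definition bcl :: "'a set set set \<Rightarrow> 'a set set set" where
  "bcl S = {p \<in> betaG. \<forall>A\<in>p. \<exists>s\<in>S. A \<in> s}"

definition bclosed :: "'a set set set \<Rightarrow> bool" where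
  "bclosed S \<longleftrightarrow> S \<subseteq> betaG \<and> bcl S = S"

definition Delta :: "'a::group_add set set \<Rightarrow> 'a set \<Rightarrow> 'a set set set" where
  "Delta p X = {lshift g p | g. X \<in> lshift g p}"

definition scattered :: "'a::group_add set \<Rightarrow> bool" where
  "scattered A \<longleftrightarrow> (\<forall>X. X \<subseteq> A \<and> infinite X \<longrightarrow> (\<exists>p \<in> Xstar X. finite (Delta p X)))"

definition ScHat :: "'a::group_add set set set" where
  "ScHat = {p \<in> betaG. \<forall>A. scattered A \<longrightarrow> - A \<in> p}"

definition idempotent_star :: "'a::group_add set set \<Rightarrow> bool" where
  "idempotent_star e \<longleftrightarrow> e \<in> Gstar \<and> umult e e = e"

definition bideal :: "'a::group_add set set set \<Rightarrow> bool" where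
  "bideal I \<longleftrightarrow> I \<noteq> {} \<and> I \<subseteq> betaG \<and>
     (\<forall>p\<in>I. \<forall>q\<in>betaG. umult p q \<in> I \<and> umult q p \<in> I)"

definition psFP :: "(nat \<Rightarrow> 'a::group_add) \<Rightarrow> (nat \<Rightarrow> 'a) \<Rightarrow> 'a set" where
  "psFP g b = {sum_list (map g is) + b (last is) | is. is \<noteq> [] \<and> sorted_wrt (<) is}"

definition is_psFP :: "'a::group_add set \<Rightarrow> bool" where
  "is_psFP S \<longleftrightarrow> (\<exists>g b. inj g \<and> S = psFP g b)"

end

theory Submission
  imports Defs
begin



definition pre :: "'a::group_add \<Rightarrow> 'a set \<Rightarrow> 'a set" where
  "pre x A = (\<lambda>y. x + y) -` A"

lemma pre_iff[simp]: "y \<in> pre x A \<longleftrightarrow> x + y \<in> A"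
  by (simp add: pre_def)

lemma pre_add: "pre y (pre x A) = pre (x + y) A"
  by (auto simp: pre_def add.assoc)

lemma pre_zero[simp]: "pre 0 A = A" by (auto simp: pre_def)

lemma pre_Int: "pre x (A \<inter> B) = pre x A \<inter> pre x B" by (auto simp: pre_def)
lemma pre_Compl: "pre x (- A) = - pre x A" by (auto simp: pre_def)
lemma pre_mono: "A \<subseteq> B \<Longrightarrow> pre x A \<subseteq> pre x B" by (auto simp: pre_def)

lemma uf_empty: "ultrafilter U \<Longrightarrow> {} \<notin> U" by (simp add: ultrafilter_def)
lemma uf_UNIV: "ultrafilter U \<Longrightarrow> UNIV \<in> U" by (simp add: ultrafilter_def)
lemma uf_mono: "ultrafilter U \<Longrightarrow> A \<in> U \<Longrightarrow> A \<subseteq> B \<Longrightarrow> B \<in> U"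
  unfolding ultrafilter_def by blast
lemma uf_Int: "ultrafilter U \<Longrightarrow> A \<in> U \<Longrightarrow> B \<in> U \<Longrightarrow> A \<inter> B \<in> U"
  unfolding ultrafilter_def by blast
lemma uf_Int_iff: "ultrafilter U \<Longrightarrow> A \<inter> B \<in> U \<longleftrightarrow> A \<in> U \<and> B \<in> U"
  using uf_Int uf_mono by blast
lemma uf_Compl: "ultrafilter U \<Longrightarrow> - A \<in> U \<longleftrightarrow> A \<notin> U"
  unfolding ultrafilter_def by (metis Int_commute Compl_disjoint)
lemma uf_nonempty: "ultrafilter U \<Longrightarrow> A \<in> U \<Longrightarrow> A \<noteq> {}"
  using uf_empty by blast
lemma uf_Un: "ultrafilter U \<Longrightarrow> A \<union> B \<in> U \<longleftrightarrow> A \<in> U \<or> B \<in> U"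
proof -
  assume u: "ultrafilter U"
  have "A \<union> B \<notin> U \<longleftrightarrow> -A \<in> U \<and> -B \<in> U"
    using uf_Compl[OF u, of "A \<union> B"] uf_Int_iff[OF u, of "-A" "-B"] by simp
  then show ?thesis using uf_Compl[OF u] by blast
qed

lemma uf_finite_Inter: assumes u: "ultrafilter U" and f: "finite F" shows "F \<subseteq> U \<Longrightarrow> \<Inter>F \<in> U"
  using f
proof (induction F rule: finite_induct)
  case empty then show ?case using u by (simp add: uf_UNIV)
next
  case (insert x F) then show ?case using u by (simp add: uf_Int)
qed

lemma uf_finite_Union: assumes u: "ultrafilter U" and f: "finite F" shows "\<Union>F \<in> U \<Longrightarrow> \<exists>A\<in>F. A \<in> U"
  using f
proof (induction F rule: finite_induct)
  case empty then show ?case using u by (simp add: uf_empty)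
next
  case (insert x F) then show ?case using u by (auto simp: uf_Un)
qed

lemma uf_finite_set: "ultrafilter U \<Longrightarrow> finite A \<Longrightarrow> A \<in> U \<Longrightarrow> \<exists>x\<in>A. {x} \<in> U"
proof -
  assume u: "ultrafilter U" and f: "finite A" and a: "A \<in> U"
  have "A = \<Union>((\<lambda>x. {x}) ` A)" by auto
  then show ?thesis using uf_finite_Union[OF u, of "(\<lambda>x. {x}) ` A"] f a by auto
qed

lemma Gstar_uf: "p \<in> Gstar \<Longrightarrow> ultrafilter p" by (simp add: Gstar_def)

lemma Gstar_infinite: "p \<in> Gstar \<Longrightarrow> A \<in> p \<Longrightarrow> infinite A"
  using uf_finite_set[of p A] by (auto simp: Gstar_def)

lemma Gstar_cofinite: "p \<in> Gstar \<Longrightarrow> A \<in> p \<Longrightarrow> finite B \<Longrightarrow> A - B \<in> p"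
proof -
  assume p: "p \<in> Gstar" and a: "A \<in> p" and b: "finite B"
  have u: "ultrafilter p" using p by (simp add: Gstar_def)
  have "A \<inter> B \<notin> p" using Gstar_infinite[OF p] b by (meson finite_Int)
  then have "- (A \<inter> B) \<in> p" using uf_Compl[OF u] by blast
  then have "A \<inter> - (A \<inter> B) \<in> p" using uf_Int[OF u a] by blast
  moreover have "A \<inter> - (A \<inter> B) = A - B" by blast
  ultimately show ?thesis by simp
qed

lemma uf_subset_eq: "ultrafilter p \<Longrightarrow> ultrafilter q \<Longrightarrow> p \<subseteq> q \<Longrightarrow> p = q"
proof -
  assume p: "ultrafilter p" and q: "ultrafilter q" and s: "p \<subseteq> q"
  have "q \<subseteq> p"
  proof
    fix A assume "A \<in> q"
    show "A \<in> p"
    proof (rule ccontr)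
      assume "A \<notin> p"
      then have "-A \<in> p" using uf_Compl[OF p] by blast
      then have "-A \<in> q" using s by blast
      then show False using \<open>A \<in> q\<close> uf_Compl[OF q] by blast
    qed
  qed
  then show ?thesis using s by blast
qed

section \<open>Ultrafilter lemma\<close>

definition fip :: "'a set set \<Rightarrow> bool" where
  "fip H \<longleftrightarrow> (\<forall>F. finite F \<longrightarrow> F \<subseteq> H \<longrightarrow> \<Inter>F \<noteq> {})"

lemma fip_insert: "fip (insert X H) \<longleftrightarrow> fip H \<and> (\<forall>F. finite F \<longrightarrow> F \<subseteq> H \<longrightarrow> \<Inter>F \<inter> X \<noteq> {})"
proof
  assume a: "fip (insert X H)"
  have "fip H" using a unfolding fip_def by blast
  moreover have "\<forall>F. finite F \<longrightarrow> F \<subseteq> H \<longrightarrow> \<Inter>F \<inter> X \<noteq> {}"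
  proof (intro allI impI)
    fix F assume "finite F" "F \<subseteq> H"
    then have "\<Inter>(insert X F) \<noteq> {}" using a unfolding fip_def by (meson finite.insertI insert_mono)
    then show "\<Inter>F \<inter> X \<noteq> {}" by (simp add: Int_commute)
  qed
  ultimately show "fip H \<and> (\<forall>F. finite F \<longrightarrow> F \<subseteq> H \<longrightarrow> \<Inter>F \<inter> X \<noteq> {})" by blast
next
  assume a: "fip H \<and> (\<forall>F. finite F \<longrightarrow> F \<subseteq> H \<longrightarrow> \<Inter>F \<inter> X \<noteq> {})"
  show "fip (insert X H)" unfolding fip_def
  proof (intro allI impI)
    fix F assume f: "finite F" "F \<subseteq> insert X H"
    show "\<Inter>F \<noteq> {}"
    proof (cases "X \<in> F")
      case True
      have "F - {X} \<subseteq> H" using f by blast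
      then have "\<Inter>(F - {X}) \<inter> X \<noteq> {}" using a f by blast
      moreover have "\<Inter>F = \<Inter>(F - {X}) \<inter> X" using True by blast
      ultimately show ?thesis by simp
    next
      case False
      then have "F \<subseteq> H" using f by blast
      then show ?thesis using a f unfolding fip_def by blast
    qed
  qed
qed

lemma ultrafilter_exists:
  assumes "fip H"
  shows "\<exists>U. ultrafilter U \<and> H \<subseteq> U"
proof -
  let ?A = "{K. H \<subseteq> K \<and> fip K}"
  have "\<exists>M\<in>?A. \<forall>X\<in>?A. M \<subseteq> X \<longrightarrow> X = M"
  proof (rule subset_Zorn)
    fix C assume ch: "subset.chain ?A C"
    show "\<exists>U\<in>?A. \<forall>X\<in>C. X \<subseteq> U"
    proof (cases "C = {}")
      case True then show ?thesis using assms by blast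
    next
      case False
      have "fip (\<Union>C)" unfolding fip_def
      proof (intro allI impI)
        fix F assume "finite F" "F \<subseteq> \<Union>C"
        then obtain B where "B \<in> C" "F \<subseteq> B"
          using finite_subset_Union_chain[OF _ _ False ch] by metis
        then have "fip B" using ch unfolding subset.chain_def by blast
        then show "\<Inter>F \<noteq> {}" using \<open>finite F\<close> \<open>F \<subseteq> B\<close> unfolding fip_def by blast
      qed
      moreover have "H \<subseteq> \<Union>C" using False ch unfolding subset.chain_def by blast
      ultimately show ?thesis by blast
    qed
  qed
  then obtain M where M0: "M \<in> ?A" and mx0: "\<forall>X\<in>?A. M \<subseteq> X \<longrightarrow> X = M" by (elim bexE)
  have M: "H \<subseteq> M" "fip M" using M0 by auto
  have mx: "X = M" if "H \<subseteq> X" "fip X" "M \<subseteq> X" for X using mx0 that by blast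
  have add: "X \<in> M" if "\<forall>F. finite F \<longrightarrow> F \<subseteq> M \<longrightarrow> \<Inter>F \<inter> X \<noteq> {}" for X
  proof -
    have "fip (insert X M)" using fip_insert M that by blast
    then have "insert X M = M" using mx M by blast
    then show ?thesis by blast
  qed
  have M_ne: "\<Inter>F \<noteq> {}" if "finite F" "F \<subseteq> M" for F using M that unfolding fip_def by blast
  have "ultrafilter M" unfolding ultrafilter_def
  proof (intro conjI allI impI)
    show "{} \<notin> M"
    proof
      assume "{} \<in> M"
      then have "{{}} \<subseteq> M" by simp
      from M_ne[OF _ this] show False by simp
    qed
    show "UNIV \<in> M"
    proof (rule add, intro allI impI)
      fix F :: "'a set set" assume "finite F" "F \<subseteq> M"
      then have "\<Inter>F \<noteq> {}" by (rule M_ne)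
      then show "\<Inter>F \<inter> UNIV \<noteq> {}" by simp
    qed
  next
    fix A B assume "A \<in> M \<and> A \<subseteq> B"
    then show "B \<in> M"
    proof (intro add allI impI)
      fix F assume "finite F" "F \<subseteq> M"
      then have "\<Inter>(insert A F) \<noteq> {}" using \<open>A \<in> M \<and> A \<subseteq> B\<close> by (intro M_ne) auto
      moreover have "\<Inter>(insert A F) \<subseteq> \<Inter>F \<inter> B" using \<open>A \<in> M \<and> A \<subseteq> B\<close> by auto
      ultimately show "\<Inter>F \<inter> B \<noteq> {}" by blast
    qed
  next
    fix A B assume ab: "A \<in> M \<and> B \<in> M"
    show "A \<inter> B \<in> M"
    proof (rule add, intro allI impI)
      fix F assume "finite F" "F \<subseteq> M"
      then have "\<Inter>(insert A (insert B F)) \<noteq> {}" using ab by (intro M_ne) auto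
      then show "\<Inter>F \<inter> (A \<inter> B) \<noteq> {}" by (simp add: Int_commute Int_left_commute)
    qed
  next
    fix A
    show "A \<in> M \<or> - A \<in> M"
    proof (rule ccontr)
      assume n: "\<not> (A \<in> M \<or> - A \<in> M)"
      then have "\<not> (\<forall>F. finite F \<longrightarrow> F \<subseteq> M \<longrightarrow> \<Inter>F \<inter> A \<noteq> {})" using add[of A] by blast
      then obtain F1 where f1: "finite F1" "F1 \<subseteq> M" "\<Inter>F1 \<inter> A = {}" by blast
      have "\<not> (\<forall>F. finite F \<longrightarrow> F \<subseteq> M \<longrightarrow> \<Inter>F \<inter> -A \<noteq> {})" using add[of "-A"] n by blast
      then obtain F2 where f2: "finite F2" "F2 \<subseteq> M" "\<Inter>F2 \<inter> -A = {}" by blast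
      note f = f1 f2
      then have "\<Inter>(F1 \<union> F2) = {}" by blast
      then show False using M_ne[of "F1 \<union> F2"] f by blast
    qed
  qed
  then show ?thesis using M by blast
qed




lemma add_eq_iff_left: "y + z = (x::'a::group_add) \<longleftrightarrow> z = -y + x"
  by (metis minus_add_cancel add_minus_cancel)

lemma pre_singleton: "pre y {x} = {-y + (x::'a::group_add)}"
  by (auto simp: pre_def add_eq_iff_left)

lemma image_pre: "(\<lambda>x. g + x) ` pre g A = (A::'a::group_add set)"
proof
  show "(\<lambda>x. g + x) ` pre g A \<subseteq> A" by (auto simp: pre_def)
  show "A \<subseteq> (\<lambda>x. g + x) ` pre g A"
  proof
    fix a assume "a \<in> A"
    then have "-g + a \<in> pre g A" by (simp add: add_minus_cancel)
    moreover have "a = g + (-g + a)" by (simp add: add_minus_cancel)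
    ultimately show "a \<in> (\<lambda>x. g + x) ` pre g A" by blast
  qed
qed

lemma pre_image: "pre g ((\<lambda>x. g + x) ` P) = (P::'a::group_add set)"
  by (auto simp: pre_def)

lemma betaG_uf: "p \<in> betaG \<longleftrightarrow> ultrafilter p" by (simp add: betaG_def)

lemma umult_iff:
  assumes p: "ultrafilter p" and q: "ultrafilter q"
  shows "A \<in> umult p q \<longleftrightarrow> {x. pre x A \<in> q} \<in> p"
proof
  assume "A \<in> umult p q"
  then obtain P Q where P: "P \<in> p" "\<forall>x\<in>P. Q x \<in> q" "(\<Union>x\<in>P. (\<lambda>y. x + y) ` Q x) \<subseteq> A"
    unfolding umult_def mem_Collect_eq by (elim bexE exE conjE) (rule that)
  have "P \<subseteq> {x. pre x A \<in> q}"
  proof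
    fix x assume x: "x \<in> P"
    have "Q x \<subseteq> pre x A" using P(3) x by fastforce
    then show "x \<in> {x. pre x A \<in> q}" using uf_mono[OF q] P(2) x by blast
  qed
  then show "{x. pre x A \<in> q} \<in> p" using uf_mono[OF p] P(1) by blast
next
  assume a: "{x. pre x A \<in> q} \<in> p"
  have "(\<Union>x\<in>{x. pre x A \<in> q}. (\<lambda>y. x + y) ` pre x A) \<subseteq> A" by auto
  then show "A \<in> umult p q" unfolding umult_def mem_Collect_eq
    by (intro bexI[OF _ a] exI[of _ "\<lambda>x. pre x A"]) simp
qed

lemma umult_uf:
  assumes p: "ultrafilter p" and q: "ultrafilter q"
  shows "ultrafilter (umult p q)"
proof -
  note I = umult_iff[OF p q]
  show ?thesis unfolding ultrafilter_def
  proof (intro conjI allI impI)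
    have "{x. pre x {} \<in> q} = {}" using uf_empty[OF q] by (simp add: pre_def)
    then show "{} \<notin> umult p q" using I uf_empty[OF p] by simp
    have "{x. pre x UNIV \<in> q} = UNIV" using uf_UNIV[OF q] by (simp add: pre_def)
    then show "UNIV \<in> umult p q" using I uf_UNIV[OF p] by simp
  next
    fix A B assume ab: "A \<in> umult p q \<and> A \<subseteq> B"
    have "{x. pre x A \<in> q} \<subseteq> {x. pre x B \<in> q}" using ab uf_mono[OF q] pre_mono by blast
    then show "B \<in> umult p q" using ab I uf_mono[OF p] by blast
  next
    fix A B assume ab: "A \<in> umult p q \<and> B \<in> umult p q"
    have "{x. pre x (A \<inter> B) \<in> q} = {x. pre x A \<in> q} \<inter> {x. pre x B \<in> q}"
      using uf_Int_iff[OF q] by (auto simp: pre_Int)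
    then show "A \<inter> B \<in> umult p q" using ab I uf_Int[OF p] by simp
  next
    fix A
    have "{x. pre x (-A) \<in> q} = - {x. pre x A \<in> q}"
      using uf_Compl[OF q] by (auto simp: pre_Compl)
    then show "A \<in> umult p q \<or> - A \<in> umult p q" using I uf_Compl[OF p] by auto
  qed
qed

lemma umult_betaG: "p \<in> betaG \<Longrightarrow> q \<in> betaG \<Longrightarrow> umult p q \<in> betaG"
  using umult_uf by (simp add: betaG_def)

lemma umult_assoc:
  assumes p: "ultrafilter p" and q: "ultrafilter q" and r: "ultrafilter r"
  shows "umult (umult p q) r = umult p (umult q r)"
proof (rule set_eqI)
  fix A
  have pq: "ultrafilter (umult p q)" and qr: "ultrafilter (umult q r)" using umult_uf assms by auto
  have "A \<in> umult (umult p q) r \<longleftrightarrow> {x. pre x A \<in> r} \<in> umult p q" using umult_iff[OF pq r] .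
  also have "\<dots> \<longleftrightarrow> {y. pre y {x. pre x A \<in> r} \<in> q} \<in> p" using umult_iff[OF p q] .
  also have "{y. pre y {x. pre x A \<in> r} \<in> q} = {y. {z. pre z (pre y A) \<in> r} \<in> q}"
    by (simp add: pre_add) (simp add: pre_def)
  also have "\<dots> = {y. pre y A \<in> umult q r}" using umult_iff[OF q r] by simp
  also have "(\<dots> \<in> p) \<longleftrightarrow> A \<in> umult p (umult q r)" using umult_iff[OF p qr] by simp
  finally show "A \<in> umult (umult p q) r \<longleftrightarrow> A \<in> umult p (umult q r)" .
qed

lemma umult_Gstar:
  assumes p: "ultrafilter p" and q: "q \<in> Gstar"
  shows "umult p q \<in> Gstar"
proof -
  have uq: "ultrafilter q" using q by (simp add: Gstar_def)
  have u: "ultrafilter (umult p q)" using umult_uf[OF p uq] .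
  have "{x} \<notin> umult p q" for x
  proof
    assume "{x} \<in> umult p q"
    then have a: "{y. pre y {x} \<in> q} \<in> p" using umult_iff[OF p uq] by simp
    have "{y. pre y {x} \<in> q} = {}" using q by (simp add: Gstar_def pre_singleton)
    then show False using a uf_empty[OF p] by simp
  qed
  then show ?thesis using u by (simp add: Gstar_def)
qed

lemma lshift_iff: "A \<in> lshift g p \<longleftrightarrow> pre g A \<in> p"
proof
  assume "A \<in> lshift g p"
  then obtain P where "P \<in> p" "A = (\<lambda>x. g + x) ` P" unfolding lshift_def by blast
  moreover have "pre g A = P" using \<open>A = (\<lambda>x. g + x) ` P\<close> pre_image by metis
  ultimately show "pre g A \<in> p" by simp
next
  assume "pre g A \<in> p"
  then have "(\<lambda>x. g + x) ` pre g A \<in> lshift g p" unfolding lshift_def by (rule imageI)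
  then show "A \<in> lshift g p" by (simp add: image_pre)
qed

lemma lshift_uf:
  assumes p: "ultrafilter p" shows "ultrafilter (lshift g p)"
  unfolding ultrafilter_def lshift_iff
proof (intro conjI allI impI)
  show "pre g {} \<notin> p" using uf_empty[OF p] by (simp add: pre_def)
  show "pre g UNIV \<in> p" using uf_UNIV[OF p] by (simp add: pre_def)
next
  fix A B assume "pre g A \<in> p \<and> A \<subseteq> B"
  then show "pre g B \<in> p" using uf_mono[OF p] pre_mono by blast
next
  fix A B assume "pre g A \<in> p \<and> pre g B \<in> p"
  then show "pre g (A \<inter> B) \<in> p" using uf_Int[OF p] by (simp add: pre_Int)
next
  fix A show "pre g A \<in> p \<or> pre g (- A) \<in> p" using uf_Compl[OF p] by (simp add: pre_Compl)
qed




lemma bcl_mono: "S \<subseteq> T \<Longrightarrow> bcl S \<subseteq> bcl T"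
  unfolding bcl_def by blast

lemma bcl_sub: "S \<subseteq> betaG \<Longrightarrow> S \<subseteq> bcl S"
  unfolding bcl_def by blast

lemma bclosedI: "K \<subseteq> betaG \<Longrightarrow> bcl K \<subseteq> K \<Longrightarrow> bclosed K"
  unfolding bclosed_def using bcl_sub by blast

lemma bclosed_sub: "bclosed K \<Longrightarrow> K \<subseteq> betaG" by (simp add: bclosed_def)

lemma bclosed_bcl: "bclosed K \<Longrightarrow> bcl K = K" by (simp add: bclosed_def)

lemma bcl_betaG: "bcl S \<subseteq> betaG" by (auto simp: bcl_def)

lemma bclosed_Inter:
  assumes "C \<noteq> {}" "\<forall>K\<in>C. bclosed K"
  shows "bclosed (\<Inter>C)"
proof (rule bclosedI)
  obtain K0 where "K0 \<in> C" using assms by blast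
  then show "\<Inter>C \<subseteq> betaG" using assms bclosed_sub by blast
  show "bcl (\<Inter>C) \<subseteq> \<Inter>C"
  proof
    fix p assume p: "p \<in> bcl (\<Inter>C)"
    show "p \<in> \<Inter>C"
    proof
      fix K assume K: "K \<in> C"
      have "bcl (\<Inter>C) \<subseteq> bcl K" using K by (intro bcl_mono) blast
      then show "p \<in> K" using p K assms bclosed_bcl by blast
    qed
  qed
qed

lemma bclosed_Int: "bclosed K \<Longrightarrow> bclosed L \<Longrightarrow> bclosed (K \<inter> L)"
  using bclosed_Inter[of "{K, L}"] by simp

lemma bclosed_basic: "bclosed {s \<in> betaG. A \<in> s}"
proof (rule bclosedI)
  show "bcl {s \<in> betaG. A \<in> s} \<subseteq> {s \<in> betaG. A \<in> s}"
  proof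
    fix p assume p: "p \<in> bcl {s \<in> betaG. A \<in> s}"
    then have u: "ultrafilter p" by (simp add: bcl_def betaG_def)
    have "A \<in> p"
    proof (rule ccontr)
      assume "A \<notin> p"
      then have "-A \<in> p" using uf_Compl[OF u] by blast
      then obtain s where "s \<in> betaG" "A \<in> s" "-A \<in> s" using p unfolding bcl_def by blast
      then show False using uf_Compl[of s A] by (simp add: betaG_def)
    qed
    then show "p \<in> {s \<in> betaG. A \<in> s}" using p by (simp add: bcl_def)
  qed
qed auto

lemma bclosed_singleton: "e \<in> betaG \<Longrightarrow> bclosed {e}"
proof (rule bclosedI)
  assume e: "e \<in> betaG"
  then show "{e} \<subseteq> betaG" by simp
  show "bcl {e} \<subseteq> {e}"
  proof
    fix p assume p: "p \<in> bcl {e}"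
    then have "p \<subseteq> e" "p \<in> betaG" by (auto simp: bcl_def)
    then show "p \<in> {e}" using uf_subset_eq e by (simp add: betaG_def)
  qed
qed

lemma Gstar_betaG: "Gstar \<subseteq> betaG" by (auto simp: Gstar_def betaG_def)

lemma bclosed_Gstar: "bclosed Gstar"
proof (rule bclosedI)
  show "Gstar \<subseteq> betaG" by (rule Gstar_betaG)
  show "bcl Gstar \<subseteq> Gstar"
  proof
    fix p assume p: "p \<in> bcl Gstar"
    have "{x} \<notin> p" for x
    proof
      assume "{x} \<in> p"
      then obtain s where "s \<in> Gstar" "{x} \<in> s" using p unfolding bcl_def by blast
      then show False by (simp add: Gstar_def)
    qed
    then show "p \<in> Gstar" using p by (simp add: bcl_def Gstar_def betaG_def)
  qed
qed

lemma Xstar_eq: "Xstar X = Gstar \<inter> {s \<in> betaG. X \<in> s}"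
  using Gstar_betaG by (auto simp: Xstar_def)

lemma bclosed_Xstar: "bclosed (Xstar X)"
  unfolding Xstar_eq by (intro bclosed_Int bclosed_Gstar bclosed_basic)

section \<open>Compactness\<close>

lemma compact_fip:
  assumes cl: "\<forall>K\<in>KK. bclosed K"
    and fi: "\<And>F. finite F \<Longrightarrow> F \<subseteq> KK \<Longrightarrow> \<exists>p\<in>betaG. \<forall>K\<in>F. p \<in> K"
  shows "\<exists>p\<in>betaG. \<forall>K\<in>KK. p \<in> K"
proof -
  define H where "H = {A. \<exists>K\<in>KK. \<forall>p\<in>K. A \<in> p}"
  have "fip H" unfolding fip_def
  proof (intro allI impI)
    fix F assume F: "finite F" "F \<subseteq> H"
    then have "\<forall>A\<in>F. \<exists>K. K \<in> KK \<and> (\<forall>p\<in>K. A \<in> p)" unfolding H_def by blast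
    then obtain f where f: "\<forall>A\<in>F. f A \<in> KK \<and> (\<forall>p\<in>f A. A \<in> p)" by (rule bchoice[THEN exE])
    have "finite (f ` F)" "f ` F \<subseteq> KK" using F f by auto
    then obtain p where p: "p \<in> betaG" "\<forall>K\<in>f ` F. p \<in> K" using fi[OF \<open>finite (f ` F)\<close> \<open>f ` F \<subseteq> KK\<close>] by blast
    have "F \<subseteq> p" using p f by blast
    then have "\<Inter>F \<in> p" using uf_finite_Inter[of p F] p F by (simp add: betaG_def)
    then show "\<Inter>F \<noteq> {}" using uf_empty[of p] p by (auto simp: betaG_def)
  qed
  then obtain u where u: "ultrafilter u" "H \<subseteq> u" using ultrafilter_exists by blast
  have "u \<in> K" if K: "K \<in> KK" for K
  proof -
    have "u \<in> bcl K" unfolding bcl_def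
    proof (intro CollectI conjI ballI)
      show "u \<in> betaG" using u by (simp add: betaG_def)
      fix A assume A: "A \<in> u"
      show "\<exists>s\<in>K. A \<in> s"
      proof (rule ccontr)
        assume "\<not> (\<exists>s\<in>K. A \<in> s)"
        have "-A \<in> s" if "s \<in> K" for s
        proof -
          have "s \<in> betaG" using cl K bclosed_sub that by blast
          then have "ultrafilter s" by (simp add: betaG_def)
          then show "-A \<in> s" using uf_Compl \<open>\<not> (\<exists>s\<in>K. A \<in> s)\<close> that by blast
        qed
        then have "\<forall>s\<in>K. -A \<in> s" by blast
        then have "-A \<in> H" using K unfolding H_def by blast
        then have "-A \<in> u" using u by blast
        then show False using A uf_Compl[OF u(1)] by blast
      qed
    qed
    then show ?thesis using cl K bclosed_bcl by blast
  qed
  then show ?thesis using u by (auto simp: betaG_def)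
qed

lemma compact_chain:
  assumes ne: "KK \<noteq> {}" and cl: "\<forall>K\<in>KK. bclosed K \<and> K \<noteq> {}"
    and ch: "\<forall>K\<in>KK. \<forall>L\<in>KK. K \<subseteq> L \<or> L \<subseteq> K"
  shows "\<exists>p\<in>betaG. \<forall>K\<in>KK. p \<in> K"
proof (rule compact_fip)
  show "\<forall>K\<in>KK. bclosed K" using cl by blast
  fix F assume F: "finite F" "F \<subseteq> KK"
  show "\<exists>p\<in>betaG. \<forall>K\<in>F. p \<in> K"
  proof (cases "F = {}")
    case True
    obtain K where K: "K \<in> KK" using ne by blast
    then obtain p where "p \<in> K" using cl by blast
    then have "p \<in> betaG" using K cl bclosed_sub by blast
    then show ?thesis using True by blast
  next
    case False
    have "subset.chain UNIV F" using ch F unfolding subset_chain_def by blast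
    then have "\<Inter>F \<in> F" using Inter_in_chain[OF F(1) False] by blast
    then obtain p where p: "p \<in> \<Inter>F" using cl F by blast
    then have "p \<in> betaG" using \<open>\<Inter>F \<in> F\<close> F cl bclosed_sub by blast
    then show ?thesis using p by blast
  qed
qed

section \<open>Continuity of right multiplication\<close>

lemma bclosed_preimage:
  assumes Y: "bclosed Y" and q: "q \<in> betaG"
  shows "bclosed {r \<in> betaG. umult r q \<in> Y}"
proof (rule bclosedI)
  show "bcl {r \<in> betaG. umult r q \<in> Y} \<subseteq> {r \<in> betaG. umult r q \<in> Y}"
  proof
    fix r assume r: "r \<in> bcl {r \<in> betaG. umult r q \<in> Y}"
    have ur: "ultrafilter r" and uq: "ultrafilter q" using r q by (auto simp: bcl_def betaG_def)
    have "umult r q \<in> bcl Y" unfolding bcl_def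
    proof (intro CollectI conjI ballI)
      show "umult r q \<in> betaG" using umult_uf[OF ur uq] by (simp add: betaG_def)
      fix B assume "B \<in> umult r q"
      then have "{x. pre x B \<in> q} \<in> r" using umult_iff[OF ur uq] by blast
      then obtain r' where r': "r' \<in> betaG" "umult r' q \<in> Y" "{x. pre x B \<in> q} \<in> r'"
        using r unfolding bcl_def by blast
      then have "B \<in> umult r' q" using umult_iff[of r' q B] uq by (simp add: betaG_def)
      then show "\<exists>s\<in>Y. B \<in> s" using r' by blast
    qed
    then have "umult r q \<in> Y" using Y bclosed_bcl by blast
    then show "r \<in> {r \<in> betaG. umult r q \<in> Y}" using r by (simp add: bcl_def)
  qed
qed auto

lemma bclosed_image:
  assumes K: "bclosed K" and q: "q \<in> betaG"
  shows "bclosed ((\<lambda>r. umult r q) ` K)"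
proof (rule bclosedI)
  have uq: "ultrafilter q" using q by (simp add: betaG_def)
  show "(\<lambda>r. umult r q) ` K \<subseteq> betaG" using K bclosed_sub umult_betaG q by blast
  show "bcl ((\<lambda>r. umult r q) ` K) \<subseteq> (\<lambda>r. umult r q) ` K"
  proof
    fix p assume p: "p \<in> bcl ((\<lambda>r. umult r q) ` K)"
    have up: "ultrafilter p" using p by (simp add: bcl_def betaG_def)
    define f where "f A = {r \<in> betaG. umult r q \<in> {s \<in> betaG. A \<in> s}}" for A
    have "\<exists>r\<in>betaG. \<forall>L\<in>insert K (f ` p). r \<in> L"
    proof (rule compact_fip)
      show "\<forall>L\<in>insert K (f ` p). bclosed L"
        using K bclosed_preimage[OF bclosed_basic q] unfolding f_def by blast
      fix F assume F: "finite F" "F \<subseteq> insert K (f ` p)"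
      have "F - {K} \<subseteq> f ` p" "finite (F - {K})" using F by auto
      then obtain P' where P'0: "P' \<subseteq> p" "finite P'" "F - {K} = f ` P'"
        using finite_subset_image[of "F - {K}" f p] by blast
      have P': "finite P'" "P' \<subseteq> p" "F \<subseteq> insert K (f ` P')" using P'0 by auto
      have "\<Inter>P' \<in> p" using uf_finite_Inter[OF up P'(1) P'(2)] .
      then obtain s where s: "s \<in> (\<lambda>r. umult r q) ` K" "\<Inter>P' \<in> s" using p unfolding bcl_def by blast
      then obtain r where r: "r \<in> K" "s = umult r q" by blast
      have rb: "r \<in> betaG" using r K bclosed_sub by blast
      have us: "ultrafilter s" using r rb uq umult_uf by (auto simp: betaG_def)
      have As: "A \<in> s" if "A \<in> P'" for A
        by (rule uf_mono[OF us s(2)]) (use that in blast)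
      have "r \<in> f A" if "A \<in> P'" for A
        unfolding f_def using rb us r(2) As[OF that] by (simp add: betaG_def)
      then have rall: "\<forall>L\<in>insert K (f ` P'). r \<in> L" using r(1) by blast
      show "\<exists>p\<in>betaG. \<forall>K\<in>F. p \<in> K"
      proof (intro bexI[OF _ rb] ballI)
        fix L assume "L \<in> F"
        with P'(3) have "L \<in> insert K (f ` P')" by (rule subsetD)
        then show "r \<in> L" using rall by (rule bspec[rotated])
      qed
    qed
    then obtain r where r0: "r \<in> betaG" and rall: "\<forall>L\<in>insert K (f ` p). r \<in> L" by (elim bexE)
    have r: "r \<in> betaG" "r \<in> K" "\<forall>A\<in>p. r \<in> f A" using r0 rall by simp_all
    have "p \<subseteq> umult r q" using r unfolding f_def by blast
    moreover have "ultrafilter r" using r by (simp add: betaG_def)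
    ultimately have "p = umult r q" using uf_subset_eq[OF up umult_uf[OF _ uq]] by blast
    then show "p \<in> (\<lambda>r. umult r q) ` K" using r by blast
  qed
qed

lemma zorn_min:
  assumes K0: "\<Phi> K0"
    and ch: "\<And>C. C \<noteq> {} \<Longrightarrow> \<forall>K\<in>C. \<Phi> K \<Longrightarrow> \<forall>K\<in>C. \<forall>L\<in>C. K \<subseteq> L \<or> L \<subseteq> K \<Longrightarrow> \<Phi> (\<Inter>C)"
  shows "\<exists>M. \<Phi> M \<and> M \<subseteq> K0 \<and> (\<forall>K. \<Phi> K \<longrightarrow> K \<subseteq> M \<longrightarrow> K = M)"
proof -
  let ?A = "uminus ` {K. \<Phi> K \<and> K \<subseteq> K0}"
  have "\<exists>M\<in>?A. \<forall>X\<in>?A. M \<subseteq> X \<longrightarrow> X = M"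
  proof (rule subset_Zorn)
    fix C assume c: "subset.chain ?A C"
    show "\<exists>U\<in>?A. \<forall>X\<in>C. X \<subseteq> U"
    proof (cases "C = {}")
      case True then show ?thesis using K0 by blast
    next
      case False
      let ?C = "uminus ` C"
      have sub: "C \<subseteq> ?A" using c unfolding subset_chain_def by blast
      have C1: "\<forall>K\<in>?C. \<Phi> K \<and> K \<subseteq> K0"
      proof
        fix K assume "K \<in> ?C"
        then obtain X where "X \<in> C" "K = - X" by blast
        then show "\<Phi> K \<and> K \<subseteq> K0" using sub by auto
      qed
      have C2: "\<forall>K\<in>?C. \<forall>L\<in>?C. K \<subseteq> L \<or> L \<subseteq> K" using c unfolding subset_chain_def by blast
      have "\<Phi> (\<Inter>?C)" using ch[of ?C] C1 C2 False by blast
      moreover have "\<Inter>?C \<subseteq> K0" using C1 False by blast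
      ultimately have "- \<Inter>?C \<in> ?A" by blast
      moreover have "\<forall>X\<in>C. X \<subseteq> - \<Inter>?C" by blast
      ultimately show ?thesis by blast
    qed
  qed
  then obtain M where M: "\<Phi> M" "M \<subseteq> K0" and mx: "\<forall>X\<in>?A. - M \<subseteq> X \<longrightarrow> X = - M" by blast
  have "K = M" if "\<Phi> K" "K \<subseteq> M" for K
  proof -
    have "- K \<in> ?A" using that M by blast
    moreover have "- M \<subseteq> - K" using that by blast
    ultimately have "- K = - M" using mx by blast
    then show ?thesis by simp
  qed
  then show ?thesis using M by blast
qed

section \<open>Ellis\<close>

lemma ellis:
  assumes T: "bclosed T" "T \<noteq> {}" and sg: "\<forall>a\<in>T. \<forall>b\<in>T. umult a b \<in> T"
  shows "\<exists>e\<in>T. umult e e = e"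
proof -
  define \<Phi> where "\<Phi> K \<longleftrightarrow> bclosed K \<and> K \<noteq> {} \<and> K \<subseteq> T \<and> (\<forall>a\<in>K. \<forall>b\<in>K. umult a b \<in> K)" for K
  have "\<Phi> T" using assms unfolding \<Phi>_def by blast
  have ex: "\<exists>M. \<Phi> M \<and> M \<subseteq> T \<and> (\<forall>K. \<Phi> K \<longrightarrow> K \<subseteq> M \<longrightarrow> K = M)"
  proof (rule zorn_min[where \<Phi>=\<Phi>])
    show "\<Phi> T" by fact
  next
    fix C assume C: "C \<noteq> {}" "\<forall>K\<in>C. \<Phi> K" "\<forall>K\<in>C. \<forall>L\<in>C. K \<subseteq> L \<or> L \<subseteq> K"
    have C': "\<forall>K\<in>C. bclosed K \<and> K \<noteq> {}" using C(2) unfolding \<Phi>_def by blast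
    have "bclosed (\<Inter>C)" using C(1) C' bclosed_Inter by blast
    moreover have "\<Inter>C \<noteq> {}"
    proof -
      obtain p where "p \<in> betaG" "\<forall>K\<in>C. p \<in> K" using compact_chain[OF C(1) C' C(3)] by blast
      then show ?thesis by blast
    qed
    moreover have "\<Inter>C \<subseteq> T" using C(1,2) unfolding \<Phi>_def by blast
    moreover have "\<forall>a\<in>\<Inter>C. \<forall>b\<in>\<Inter>C. umult a b \<in> \<Inter>C" using C(2) unfolding \<Phi>_def by blast
    ultimately show "\<Phi> (\<Inter>C)" unfolding \<Phi>_def by blast
  qed
  then obtain M where M: "\<Phi> M" "M \<subseteq> T" and mn: "\<forall>K. \<Phi> K \<longrightarrow> K \<subseteq> M \<longrightarrow> K = M" by blast
  have Mcl: "bclosed M" and Mne: "M \<noteq> {}" and Msg: "\<forall>a\<in>M. \<forall>b\<in>M. umult a b \<in> M"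
    using M unfolding \<Phi>_def by auto
  have Mb: "M \<subseteq> betaG" using Mcl bclosed_sub by blast
  obtain e where e: "e \<in> M" using Mne by blast
  have eb: "e \<in> betaG" using e Mb by blast
  let ?M' = "(\<lambda>r. umult r e) ` M"
  have "\<Phi> ?M'" unfolding \<Phi>_def
  proof (intro conjI)
    show "bclosed ?M'" using bclosed_image[OF Mcl eb] .
    show "?M' \<noteq> {}" using Mne by blast
    show "?M' \<subseteq> T" using Msg e M(2) by blast
    show "\<forall>a\<in>?M'. \<forall>b\<in>?M'. umult a b \<in> ?M'"
    proof (intro ballI)
      fix a b assume "a \<in> ?M'" "b \<in> ?M'"
      then obtain a' b' where ab: "a' \<in> M" "b' \<in> M" "a = umult a' e" "b = umult b' e" by blast
      have ua: "ultrafilter a" "ultrafilter b'" "ultrafilter e"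
        using ab Mb eb umult_uf by (auto simp: betaG_def)
      have "umult a b = umult (umult a b') e" using umult_assoc[OF ua] ab by simp
      moreover have "umult a b' \<in> M" using ab Msg e by blast
      ultimately show "umult a b \<in> ?M'" by blast
    qed
  qed
  moreover have "?M' \<subseteq> M" using Msg e by blast
  ultimately have "?M' = M" using mn by blast
  then have "e \<in> ?M'" using e by simp
  then obtain a where a: "a \<in> M" "umult a e = e" by blast
  let ?W = "M \<inter> {r \<in> betaG. umult r e \<in> {e}}"
  have "\<Phi> ?W" unfolding \<Phi>_def
  proof (intro conjI)
    show "bclosed ?W" using bclosed_Int[OF Mcl bclosed_preimage[OF bclosed_singleton[OF eb] eb]] .
    show "?W \<noteq> {}" using a Mb by blast
    show "?W \<subseteq> T" using M(2) by blast
    show "\<forall>x\<in>?W. \<forall>y\<in>?W. umult x y \<in> ?W"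
    proof (intro ballI)
      fix x y assume xy: "x \<in> ?W" "y \<in> ?W"
      have u: "ultrafilter x" "ultrafilter y" "ultrafilter e" using xy eb by (auto simp: betaG_def)
      have "umult (umult x y) e = e" using umult_assoc[OF u] xy by simp
      moreover have "umult x y \<in> M" using xy Msg by blast
      moreover have "umult x y \<in> betaG" using xy umult_betaG by blast
      ultimately show "umult x y \<in> ?W" by blast
    qed
  qed
  then have "?W = M" using mn by blast
  then have "umult e e = e" using e by blast
  then show ?thesis using e M(2) by blast
qed

lemma free_uf_exists:
  assumes "infinite X"
  shows "\<exists>p. p \<in> Gstar \<and> X \<in> p"
proof -
  let ?H = "insert X {- {x} | x. True}"
  have "fip ?H" unfolding fip_def
  proof (intro allI impI)
    fix F assume F: "finite F" "F \<subseteq> ?H"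
    have "F - {X} \<subseteq> {- {x} | x. True}" using F by blast
    then have "\<forall>A\<in>F - {X}. \<exists>x. A = - {x}" by blast
    then obtain f where f: "\<forall>A\<in>F - {X}. A = - {f A}" by metis
    have "X \<inter> \<Inter>(F - {X}) \<supseteq> X - f ` (F - {X})" using f by blast
    moreover have "infinite (X - f ` (F - {X}))" using assms F(1) by (simp add: Diff_infinite_finite)
    ultimately have "X \<inter> \<Inter>(F - {X}) \<noteq> {}" by (metis finite.emptyI subset_empty)
    moreover have "X \<inter> \<Inter>(F - {X}) \<subseteq> \<Inter>F" by blast
    ultimately show "\<Inter>F \<noteq> {}" by blast
  qed
  then obtain p where p: "ultrafilter p" "?H \<subseteq> p" using ultrafilter_exists by blast
  have "{x} \<notin> p" for x
  proof
    assume "{x} \<in> p"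
    moreover have "-{x} \<in> p" using p by blast
    ultimately show False using uf_Compl[OF p(1)] by blast
  qed
  then show ?thesis using p by (auto simp: Gstar_def)
qed

lemma Gstar_nonempty: "infinite (UNIV :: 'a::group_add set) \<Longrightarrow> (Gstar :: 'a set set set) \<noteq> {}"
  using free_uf_exists[of "UNIV :: 'a set"] by blast

lemma idempotent_exists:
  assumes "infinite (UNIV :: 'a::group_add set)"
  shows "\<exists>e :: 'a set set. idempotent_star e"
proof -
  have "\<forall>a\<in>Gstar. \<forall>b\<in>(Gstar :: 'a set set set). umult a b \<in> Gstar"
    using umult_Gstar Gstar_uf by blast
  then obtain e :: "'a set set" where "e \<in> Gstar" "umult e e = e"
    using ellis[OF bclosed_Gstar Gstar_nonempty[OF assms]] by blast
  then show ?thesis unfolding idempotent_star_def by blast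
qed




lemma Delta_eq: "Delta p X = (\<lambda>g. lshift g p) ` {g. pre g X \<in> p}"
  unfolding Delta_def by (auto simp: lshift_iff)

lemma Gstar_uf': "r \<in> Gstar \<Longrightarrow> r \<in> betaG" using Gstar_betaG by blast

lemma ns_step:
  assumes q: "q \<in> Xstar X" and inf: "infinite (Delta q X)"
  shows "\<exists>r\<in>Gstar. umult r q \<in> Xstar X"
proof -
  have qG: "q \<in> Gstar" and Xq: "X \<in> q" using q by (auto simp: Xstar_def)
  have uq: "ultrafilter q" using qG by (simp add: Gstar_def)
  have "infinite {g. pre g X \<in> q}"
  proof
    assume "finite {g. pre g X \<in> q}"
    then have "finite (Delta q X)" unfolding Delta_eq by (rule finite_imageI)
    then show False using inf by simp
  qed
  then obtain r where r: "r \<in> Gstar" "{g. pre g X \<in> q} \<in> r" using free_uf_exists by blast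
  have ur: "ultrafilter r" using r by (simp add: Gstar_def)
  have "X \<in> umult r q" using umult_iff[OF ur uq] r by simp
  moreover have "umult r q \<in> Gstar" using umult_Gstar[OF ur qG] .
  ultimately show ?thesis using r by (auto simp: Xstar_def)
qed

lemma ns_C:
  assumes ns: "\<not> scattered A"
  shows "\<exists>e q. idempotent_star e \<and> q \<in> betaG \<and> A \<in> umult e q"
proof -
  obtain X where X: "X \<subseteq> A" "infinite X" and ninf: "\<forall>p\<in>Xstar X. infinite (Delta p X)"
    using ns unfolding scattered_def by blast
  have step: "\<forall>q\<in>Xstar X. \<exists>r\<in>Gstar. umult r q \<in> Xstar X" using ns_step ninf by blast
  define \<Phi> where "\<Phi> Y \<longleftrightarrow> Y \<subseteq> Xstar X \<and> bclosed Y \<and> Y \<noteq> {} \<and> (\<forall>q\<in>Y. \<exists>r\<in>Gstar. umult r q \<in> Y)" for Y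
  have XsG: "Xstar X \<subseteq> betaG" using bclosed_Xstar bclosed_sub by blast
  have "Xstar X \<noteq> {}" using free_uf_exists[OF X(2)] unfolding Xstar_def by blast
  then have "\<Phi> (Xstar X)" unfolding \<Phi>_def using bclosed_Xstar step by blast
  have ex: "\<exists>M. \<Phi> M \<and> M \<subseteq> Xstar X \<and> (\<forall>K. \<Phi> K \<longrightarrow> K \<subseteq> M \<longrightarrow> K = M)"
  proof (rule zorn_min[where \<Phi>=\<Phi>])
    show "\<Phi> (Xstar X)" by fact
  next
    fix C assume C: "C \<noteq> {}" "\<forall>K\<in>C. \<Phi> K" "\<forall>K\<in>C. \<forall>L\<in>C. K \<subseteq> L \<or> L \<subseteq> K"
    have C': "\<forall>K\<in>C. bclosed K \<and> K \<noteq> {}" using C(2) unfolding \<Phi>_def by blast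
    have "bclosed (\<Inter>C)" using C(1) C' bclosed_Inter by blast
    moreover have "\<Inter>C \<noteq> {}"
    proof -
      obtain p where "p \<in> betaG" "\<forall>K\<in>C. p \<in> K" using compact_chain[OF C(1) C' C(3)] by blast
      then show ?thesis by blast
    qed
    moreover have "\<Inter>C \<subseteq> Xstar X" using C(1,2) unfolding \<Phi>_def by blast
    moreover have "\<forall>q\<in>\<Inter>C. \<exists>r\<in>Gstar. umult r q \<in> \<Inter>C"
    proof
      fix q assume q: "q \<in> \<Inter>C"
      have qb: "q \<in> betaG" using q C(1) \<open>\<Inter>C \<subseteq> Xstar X\<close> XsG by blast
      define R where "R K = Gstar \<inter> {r \<in> betaG. umult r q \<in> K}" for K
      have R1: "\<forall>L\<in>R ` C. bclosed L \<and> L \<noteq> {}"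
      proof
        fix L assume "L \<in> R ` C"
        then obtain K where K: "K \<in> C" "L = R K" by blast
        have "bclosed L" unfolding K R_def
          using bclosed_Int[OF bclosed_Gstar bclosed_preimage[OF _ qb]] C' K(1) by blast
        moreover have "q \<in> K" using q K by blast
        then obtain r where "r \<in> Gstar" "umult r q \<in> K" using C(2) K unfolding \<Phi>_def by blast
        then have "L \<noteq> {}" unfolding K R_def using Gstar_betaG by blast
        ultimately show "bclosed L \<and> L \<noteq> {}" by blast
      qed
      have R2: "\<forall>K\<in>R ` C. \<forall>L\<in>R ` C. K \<subseteq> L \<or> L \<subseteq> K"
      proof (intro ballI)
        fix K L assume "K \<in> R ` C" "L \<in> R ` C"
        then obtain K' L' where "K' \<in> C" "L' \<in> C" "K = R K'" "L = R L'" by blast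
        moreover have Rmono: "R K1 \<subseteq> R L1" if "K1 \<subseteq> L1" for K1 L1 using that unfolding R_def by blast
        moreover have "K' \<subseteq> L' \<or> L' \<subseteq> K'" using C(3) \<open>K' \<in> C\<close> \<open>L' \<in> C\<close> by blast
        ultimately show "K \<subseteq> L \<or> L \<subseteq> K" by metis
      qed
      have "R ` C \<noteq> {}" using C(1) by blast
      then obtain r where r: "r \<in> betaG" "\<forall>L\<in>R ` C. r \<in> L"
        using compact_chain[OF _ R1 R2] by blast
      have rR: "r \<in> R K" if "K \<in> C" for K using r(2) that by blast
      obtain K0 where "K0 \<in> C" using C(1) by blast
      have "r \<in> Gstar" using rR[OF \<open>K0 \<in> C\<close>] unfolding R_def by blast
      moreover have "umult r q \<in> K" if "K \<in> C" for K using rR[OF that] unfolding R_def by blast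
      then have "umult r q \<in> \<Inter>C" by blast
      ultimately show "\<exists>r\<in>Gstar. umult r q \<in> \<Inter>C" by blast
    qed
    ultimately show "\<Phi> (\<Inter>C)" unfolding \<Phi>_def by blast
  qed
  then obtain M where M: "\<Phi> M" and mn: "\<forall>K. \<Phi> K \<longrightarrow> K \<subseteq> M \<longrightarrow> K = M" by blast
  have Msub: "M \<subseteq> Xstar X" and Mcl: "bclosed M" and Mne: "M \<noteq> {}"
    and Mst: "\<forall>q\<in>M. \<exists>r\<in>Gstar. umult r q \<in> M" using M unfolding \<Phi>_def by auto
  obtain q where q: "q \<in> M" using Mne by blast
  have qb: "q \<in> betaG" using q Msub XsG by blast
  have uq: "ultrafilter q" using qb by (simp add: betaG_def)
  let ?Y = "M \<inter> (\<lambda>r. umult r q) ` Gstar"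
  have "\<Phi> ?Y" unfolding \<Phi>_def
  proof (intro conjI)
    show "?Y \<subseteq> Xstar X" using Msub by blast
    show "bclosed ?Y" using bclosed_Int[OF Mcl bclosed_image[OF bclosed_Gstar qb]] .
    show "?Y \<noteq> {}" using Mst q by blast
    show "\<forall>s\<in>?Y. \<exists>r\<in>Gstar. umult r s \<in> ?Y"
    proof
      fix s assume s: "s \<in> ?Y"
      then obtain r where r: "r \<in> Gstar" "s = umult r q" by blast
      obtain r' where r': "r' \<in> Gstar" "umult r' s \<in> M" using Mst s by blast
      have u: "ultrafilter r'" "ultrafilter r" using r r' by (auto simp: Gstar_def)
      have "umult r' s = umult (umult r' r) q" using umult_assoc[OF u uq] r by simp
      moreover have "umult r' r \<in> Gstar" using umult_Gstar[OF u(1) r(1)] .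
      ultimately have "umult r' s \<in> (\<lambda>r. umult r q) ` Gstar" by (metis imageI)
      then have "umult r' s \<in> ?Y" using r'(2) by blast
      then show "\<exists>r\<in>Gstar. umult r s \<in> ?Y" using r'(1) by blast
    qed
  qed
  then have "?Y = M" using mn by blast
  then have "q \<in> (\<lambda>r. umult r q) ` Gstar" using q by blast
  then obtain r0 where r0: "r0 \<in> Gstar" "q = umult r0 q" by (rule imageE)
  let ?W = "Gstar \<inter> {r \<in> betaG. umult r q \<in> {q}}"
  have Wcl: "bclosed ?W" using bclosed_Int[OF bclosed_Gstar bclosed_preimage[OF bclosed_singleton[OF qb] qb]] .
  have Wne: "?W \<noteq> {}" using r0 Gstar_betaG by blast
  have Wsg: "\<forall>a\<in>?W. \<forall>b\<in>?W. umult a b \<in> ?W"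
  proof (intro ballI)
    fix a b assume ab: "a \<in> ?W" "b \<in> ?W"
    have u: "ultrafilter a" "ultrafilter b" using ab by (auto simp: Gstar_def)
    have "umult (umult a b) q = q" using umult_assoc[OF u uq] ab by simp
    moreover have "umult a b \<in> Gstar" using umult_Gstar[OF u(1)] ab by blast
    ultimately show "umult a b \<in> ?W" using Gstar_betaG by blast
  qed
  obtain e where e: "e \<in> ?W" "umult e e = e" using ellis[OF Wcl Wne Wsg] by blast
  have "idempotent_star e" using e unfolding idempotent_star_def by blast
  moreover have "X \<in> q" using q Msub by (auto simp: Xstar_def)
  then have "A \<in> umult e q" using e X(1) uf_mono[OF uq] by auto
  ultimately show ?thesis using qb by blast
qed




definition config :: "'a::group_add set \<Rightarrow> bool" where
  "config A \<longleftrightarrow> (\<exists>g::nat \<Rightarrow> 'a. inj g \<and> (\<forall>n. \<exists>y. \<forall>l. sorted_wrt (<) l \<and> set l \<subseteq> {..<n}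
       \<longrightarrow> sum_list (map g l) + y \<in> A))"

lemma finite_sorted_lists: "finite {l. sorted_wrt (<) l \<and> set l \<subseteq> {..<(n::nat)}}"
proof (rule finite_subset)
  show "{l. sorted_wrt (<) l \<and> set l \<subseteq> {..<n}} \<subseteq> {xs. set xs \<subseteq> {..<n} \<and> distinct xs}"
    by (auto simp: strict_sorted_iff)
  show "finite {xs. set xs \<subseteq> {..<n} \<and> distinct xs}" by (rule finite_subset_distinct) simp
qed

lemma sorted_last_max:
  assumes "sorted_wrt (<) l" "l \<noteq> []" "x \<in> set (butlast l)"
  shows "x < last l"
proof -
  have "l = butlast l @ [last l]" using assms(2) by simp
  then have "sorted_wrt (<) (butlast l @ [last l])" using assms(1) by simp
  then show ?thesis using assms(3) by (simp add: sorted_wrt_append)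
qed

lemma sorted_snoc_split:
  assumes s: "sorted_wrt (<) l" and n: "n \<in> set l" and sub: "set l \<subseteq> {..<Suc n}"
  shows "l = butlast l @ [n] \<and> sorted_wrt (<) (butlast l) \<and> set (butlast l) \<subseteq> {..<n}"
proof -
  have ne: "l \<noteq> []" using n by auto
  have lastin: "last l \<in> set l" using ne by simp
  have "last l = n"
  proof (rule ccontr)
    assume "last l \<noteq> n"
    then have "n \<in> set (butlast l)" using n ne by (metis append_butlast_last_id rotate1.simps(2) set_rotate1 set_ConsD)
    then have "n < last l" using sorted_last_max[OF s ne] by blast
    moreover have "last l \<le> n" using lastin sub by auto
    ultimately show False by simp
  qed
  moreover have eq: "l = butlast l @ [last l]" using ne by simp
  moreover have "sorted_wrt (<) (butlast l)" using s eq by (metis sorted_wrt_append)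
  moreover have "set (butlast l) \<subseteq> {..<n}" using sorted_last_max[OF s ne] \<open>last l = n\<close> by auto
  ultimately show ?thesis by metis
qed

lemma config_psFP:
  assumes "config A" shows "\<exists>S. is_psFP S \<and> S \<subseteq> A"
proof -
  obtain g :: "nat \<Rightarrow> 'a" where g: "inj g"
    and y0: "\<forall>n. \<exists>y. \<forall>l. sorted_wrt (<) l \<and> set l \<subseteq> {..<n} \<longrightarrow> sum_list (map g l) + y \<in> A"
    using assms unfolding config_def by blast
  obtain y where y: "\<And>n l. sorted_wrt (<) l \<Longrightarrow> set l \<subseteq> {..<n} \<Longrightarrow> sum_list (map g l) + y n \<in> A"
    using y0 by metis
  define b where "b n = - g n + y n" for n
  have "psFP g b \<subseteq> A"
  proof
    fix x assume "x \<in> psFP g b"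
    then obtain l where l: "l \<noteq> []" "sorted_wrt (<) l" "x = sum_list (map g l) + b (last l)"
      unfolding psFP_def by blast
    let ?n = "last l"
    have "set l \<subseteq> {..<Suc ?n}"
    proof
      fix i assume "i \<in> set l"
      then have "i \<in> set (butlast l) \<or> i = last l" using l(1) by (metis append_butlast_last_id rotate1.simps(2) set_rotate1 set_ConsD)
      then show "i \<in> {..<Suc ?n}" using sorted_last_max[OF l(2) l(1)] by fastforce
    qed
    moreover have "?n \<in> set l" using l(1) by simp
    ultimately have sp: "l = butlast l @ [?n]" "sorted_wrt (<) (butlast l)" "set (butlast l) \<subseteq> {..<?n}"
      using sorted_snoc_split[OF l(2)] by blast+
    have "x = sum_list (map g (butlast l @ [?n])) + b ?n" using l(3) sp(1) by metis
    also have "\<dots> = sum_list (map g (butlast l)) + y ?n" by (simp add: b_def add.assoc)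
    finally show "x \<in> A" using y[OF sp(2) sp(3)] by simp
  qed
  then show ?thesis unfolding is_psFP_def using g by blast
qed

section \<open>Galvin-Glazer style construction\<close>

lemma idem_star:
  assumes e: "idempotent_star e" and C: "C \<in> e"
  shows "{x \<in> C. pre x C \<in> e} \<in> e"
proof -
  have ue: "ultrafilter e" using e by (simp add: idempotent_star_def Gstar_def)
  have "C \<in> umult e e" using e C by (simp add: idempotent_star_def)
  then have "{x. pre x C \<in> e} \<in> e" using umult_iff[OF ue ue] by simp
  then have "C \<inter> {x. pre x C \<in> e} \<in> e" using uf_Int[OF ue C] by simp
  moreover have "C \<inter> {x. pre x C \<in> e} = {x \<in> C. pre x C \<in> e}" by blast
  ultimately show ?thesis by simp
qed

lemma sum_list_conj:
  "sum_list (map (\<lambda>k. c + h k + - c) l) = c + sum_list (map h l) + - (c::'a::group_add)"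
proof (induction l)
  case Nil then show ?case by simp
next
  case (Cons a l)
  have "sum_list (map (\<lambda>k. c + h k + - c) (a # l)) = (c + h a + - c) + (c + sum_list (map h l) + - c)"
    using Cons by simp
  also have "\<dots> = c + (h a + sum_list (map h l)) + - c" by (simp only: add.assoc minus_add_cancel)
  finally show ?case by simp
qed

lemma C_config:
  assumes e: "idempotent_star e" and q: "q \<in> betaG" and A: "A \<in> umult e q"
  shows "config A"
proof -
  have eG: "e \<in> Gstar" and ue: "ultrafilter e" using e by (auto simp: idempotent_star_def Gstar_def)
  have uq: "ultrafilter q" using q by (simp add: betaG_def)
  define B0 where "B0 = {x. pre x A \<in> q}"
  have B0e: "B0 \<in> e" using umult_iff[OF ue uq] A unfolding B0_def by simp
  define B1 where "B1 = {x \<in> B0. pre x B0 \<in> e}"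
  have B1e: "B1 \<in> e" unfolding B1_def by (rule idem_star[OF e B0e])
  have key: "pre x B1 \<in> e" if x: "x \<in> B1" for x
  proof -
    have "pre x B0 \<in> e" using x unfolding B1_def by blast
    then have "{y \<in> pre x B0. pre y (pre x B0) \<in> e} \<in> e" by (rule idem_star[OF e])
    moreover have "{y \<in> pre x B0. pre y (pre x B0) \<in> e} \<subseteq> pre x B1"
      unfolding B1_def by (auto simp: pre_add)
    ultimately show ?thesis using uf_mono[OF ue] by blast
  qed
  obtain g0 where g0: "g0 \<in> B1" using B1e uf_nonempty[OF ue] by blast
  define P where "P n hs \<longleftrightarrow> length hs = n \<and> distinct hs \<and>
     (\<forall>l. sorted_wrt (<) l \<and> set l \<subseteq> {..<n} \<longrightarrow> g0 + sum_list (map ((!) hs) l) \<in> B1)" for n hs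
  define Q where "Q (n::nat) hs hs' \<longleftrightarrow> (\<exists>h. hs' = hs @ [h])" for n and hs hs' :: "'a list"
  have "\<exists>f. \<forall>n. P n (f n) \<and> Q n (f n) (f (Suc n))"
  proof (rule dependent_nat_choice)
    show "\<exists>x. P 0 x" unfolding P_def using g0 by (intro exI[of _ "[]"]) auto
  next
    fix hs n assume Pn: "P n hs"
    define Fs where "Fs = (\<lambda>l. g0 + sum_list (map ((!) hs) l)) ` {l. sorted_wrt (<) l \<and> set l \<subseteq> {..<n}}"
    have Fsf: "finite Fs" unfolding Fs_def using finite_sorted_lists by blast
    have FsB: "Fs \<subseteq> B1" using Pn unfolding Fs_def P_def by blast
    have "(\<lambda>x. pre x B1) ` Fs \<subseteq> e" using FsB key by blast
    then have "\<Inter>((\<lambda>x. pre x B1) ` Fs) \<in> e" using uf_finite_Inter[OF ue] Fsf by blast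
    then have "\<Inter>((\<lambda>x. pre x B1) ` Fs) - set hs \<in> e" using Gstar_cofinite[OF eG] by blast
    then obtain h where h: "h \<in> \<Inter>((\<lambda>x. pre x B1) ` Fs)" "h \<notin> set hs" using uf_nonempty[OF ue] by blast
    have "P (Suc n) (hs @ [h])" unfolding P_def
    proof (intro conjI allI impI)
      show "length (hs @ [h]) = Suc n" using Pn unfolding P_def by simp
      show "distinct (hs @ [h])" using Pn h(2) unfolding P_def by simp
      fix l assume l: "sorted_wrt (<) l \<and> set l \<subseteq> {..<Suc n}"
      have lenhs: "length hs = n" using Pn unfolding P_def by simp
      show "g0 + sum_list (map ((!) (hs @ [h])) l) \<in> B1"
      proof (cases "n \<in> set l")
        case False
        then have sub: "set l \<subseteq> {..<n}" using l by (force simp: subset_iff less_Suc_eq)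
        then have eq: "map ((!) (hs @ [h])) l = map ((!) hs) l" using lenhs by (auto simp: nth_append)
        have "g0 + sum_list (map ((!) hs) l) \<in> B1" using Pn l sub unfolding P_def by blast
        then show ?thesis by (simp only: eq)
      next
        case True
        have sp: "l = butlast l @ [n]" "sorted_wrt (<) (butlast l)" "set (butlast l) \<subseteq> {..<n}"
          using sorted_snoc_split[of l n] l True by auto
        have m1: "map ((!) (hs @ [h])) (butlast l) = map ((!) hs) (butlast l)" using sp(3) lenhs by (auto simp: nth_append)
        have m2: "(hs @ [h]) ! n = h" using nth_append_length[of hs h] lenhs by simp
        have "map ((!) (hs @ [h])) l = map ((!) (hs @ [h])) (butlast l) @ [(hs @ [h]) ! n]"
          by (subst sp(1)) simp
        then have "sum_list (map ((!) (hs @ [h])) l) = sum_list (map ((!) hs) (butlast l)) + h"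
          by (simp only: m1 m2 sum_list_append) simp
        moreover have "g0 + sum_list (map ((!) hs) (butlast l)) \<in> Fs" unfolding Fs_def using sp by blast
        then have "h \<in> pre (g0 + sum_list (map ((!) hs) (butlast l))) B1" using h(1) by blast
        ultimately show ?thesis by (simp add: add.assoc)
      qed
    qed
    moreover have "Q n hs (hs @ [h])" unfolding Q_def by blast
    ultimately show "\<exists>y. P (Suc n) y \<and> Q n hs y" by blast
  qed
  then obtain f where fP: "\<And>n. P n (f n)" and fQ: "\<And>n. Q n (f n) (f (Suc n))" by blast
  have take_f: "take m (f m') = f m" if "m \<le> m'" for m m'
    using that
  proof (induction m' rule: dec_induct)
    case base then show ?case using fP[of m] unfolding P_def by simp
  next
    case (step k)
    obtain h where "f (Suc k) = f k @ [h]" using fQ[of k] unfolding Q_def by blast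
    moreover have "length (f k) = k" using fP[of k] unfolding P_def by simp
    ultimately show ?case using step by simp
  qed
  define h where "h k = f (Suc k) ! k" for k
  have fnth: "f n ! i = h i" if "i < n" for n i
  proof -
    have "take (Suc i) (f n) = f (Suc i)" using take_f that by simp
    then have "f (Suc i) ! i = take (Suc i) (f n) ! i" by simp
    also have "\<dots> = f n ! i" by simp
    finally show ?thesis unfolding h_def by simp
  qed
  have hinj: "inj h"
  proof (rule injI)
    fix i j assume hij: "h i = h j"
    show "i = j"
    proof (rule ccontr)
      assume "i \<noteq> j"
      let ?m = "Suc (max i j)"
      have d: "distinct (f ?m)" "length (f ?m) = ?m" using fP[of ?m] unfolding P_def by auto
      have "f ?m ! i = f ?m ! j" using fnth[of i ?m] fnth[of j ?m] hij by simp
      then have "i = j" using d nth_eq_iff_index_eq[of "f ?m" i j] by simp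
      then show False using \<open>i \<noteq> j\<close> by simp
    qed
  qed
  have prod: "g0 + sum_list (map h l) \<in> B1" if "sorted_wrt (<) l" "set l \<subseteq> {..<n}" for l n
  proof -
    have "map ((!) (f n)) l = map h l" using that fnth by auto
    then show ?thesis using fP[of n] that unfolding P_def by metis
  qed
  define g' where "g' k = g0 + h k + - g0" for k
  have g'inj: "inj g'"
  proof (rule injI)
    fix i j assume "g' i = g' j"
    then have "g0 + h i + - g0 = g0 + h j + - g0" unfolding g'_def .
    then have "h i = h j" by (simp only: add_right_cancel add_left_cancel)
    then show "i = j" using hinj by (simp add: inj_eq)
  qed
  have "\<exists>y. \<forall>l. sorted_wrt (<) l \<and> set l \<subseteq> {..<n} \<longrightarrow> sum_list (map g' l) + y \<in> A" for n
  proof -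
    define Fs where "Fs = (\<lambda>l. g0 + sum_list (map h l)) ` {l. sorted_wrt (<) l \<and> set l \<subseteq> {..<n}}"
    have Fsf: "finite Fs" unfolding Fs_def using finite_sorted_lists by blast
    have "Fs \<subseteq> B0" using prod unfolding Fs_def B1_def by blast
    then have "(\<lambda>x. pre x A) ` Fs \<subseteq> q" unfolding B0_def by blast
    then have "\<Inter>((\<lambda>x. pre x A) ` Fs) \<in> q" using uf_finite_Inter[OF uq] Fsf by blast
    then obtain z where z: "z \<in> \<Inter>((\<lambda>x. pre x A) ` Fs)" using uf_nonempty[OF uq] by blast
    have "sum_list (map g' l) + (g0 + z) \<in> A" if "sorted_wrt (<) l \<and> set l \<subseteq> {..<n}" for l
    proof -
      have "g0 + sum_list (map h l) \<in> Fs" unfolding Fs_def using that by blast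
      then have "g0 + sum_list (map h l) + z \<in> A" using z by auto
      moreover have "sum_list (map g' l) = g0 + sum_list (map h l) + - g0"
        unfolding g'_def by (rule sum_list_conj)
      moreover have "g0 + sum_list (map h l) + - g0 + (g0 + z) = g0 + sum_list (map h l) + z"
        by (simp only: add.assoc minus_add_cancel)
      ultimately show ?thesis by simp
    qed
    then show ?thesis by blast
  qed
  then show ?thesis unfolding config_def using g'inj by blast
qed




section \<open>Free action\<close>

lemma lshift_lshift: "lshift a (lshift b p) = lshift (a + b) p"
  by (rule set_eqI) (simp add: lshift_iff pre_add)

lemma lshift_zero: "lshift 0 p = p"
  by (rule set_eqI) (simp add: lshift_iff)

lemma lshift_fix:
  assumes u: "ultrafilter p" and h: "h \<noteq> 0"
  shows "lshift h p \<noteq> p"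
proof
  assume fix0: "lshift h p = p"
  have fixA: "A \<in> p \<longleftrightarrow> pre h A \<in> p" for A
    using fix0 lshift_iff[of A h p] by simp
  let ?A = "{C. \<forall>x\<in>C. h + x \<notin> C}"
  have "\<exists>M\<in>?A. \<forall>X\<in>?A. M \<subseteq> X \<longrightarrow> X = M"
  proof (rule subset_Zorn)
    fix C assume ch: "subset.chain ?A C"
    have "\<Union>C \<in> ?A"
    proof (intro CollectI ballI)
      fix x assume "x \<in> \<Union>C"
      then obtain C1 where C1: "C1 \<in> C" "x \<in> C1" by blast
      show "h + x \<notin> \<Union>C"
      proof
        assume "h + x \<in> \<Union>C"
        then obtain C2 where C2: "C2 \<in> C" "h + x \<in> C2" by blast
        have "C1 \<subseteq> C2 \<or> C2 \<subseteq> C1" using ch C1 C2 unfolding subset_chain_def by blast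
        moreover have "C1 \<in> ?A" "C2 \<in> ?A" using ch C1 C2 unfolding subset_chain_def by blast+
        ultimately show False using C1 C2 by blast
      qed
    qed
    then show "\<exists>U\<in>?A. \<forall>X\<in>C. X \<subseteq> U" by blast
  qed
  then obtain M where M: "M \<in> ?A" and mx: "\<forall>X\<in>?A. M \<subseteq> X \<longrightarrow> X = M" by blast
  have cover: "x \<in> M \<or> -h + x \<in> M \<or> h + x \<in> M" for x
  proof (rule ccontr)
    assume n: "\<not> (x \<in> M \<or> -h + x \<in> M \<or> h + x \<in> M)"
    have "insert x M \<in> ?A"
    proof (intro CollectI ballI)
      fix y assume y: "y \<in> insert x M"
      show "h + y \<notin> insert x M"
      proof
        assume hy: "h + y \<in> insert x M"
        show False
        proof (cases "y = x")
          case True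
          then have "h + x = x \<or> h + x \<in> M" using hy by blast
          moreover have "h + x \<noteq> x"
          proof
            assume "h + x = x"
            then have "h + x = 0 + x" by simp
            then show False using h by (simp only: add_right_cancel)
          qed
          ultimately show False using n by blast
        next
          case False
          then have yM: "y \<in> M" using y by blast
          then have "h + y \<notin> M" using M by blast
          then have "h + y = x" using hy by blast
          then have "-h + x = y" by (metis minus_add_cancel)
          then show False using n yM by simp
        qed
      qed
    qed
    then have "insert x M = M" using mx by blast
    then show False using n by blast
  qed
  have disj: "M \<inter> pre (-h) M = {}"
  proof (rule ccontr)
    assume "M \<inter> pre (-h) M \<noteq> {}"
    then obtain x where x: "x \<in> M" "-h + x \<in> M" by auto
    have "h + (-h + x) = x" by (simp add: add_minus_cancel)
    then show False using x M by force
  qed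
  have pre1: "pre h (pre (-h) M) = M" by (simp add: pre_add)
  have "x \<in> M \<union> pre (-h) M \<union> pre h M" for x using cover[of x] by simp
  then have "M \<union> pre (-h) M \<union> pre h M = UNIV" by blast
  then have "M \<in> p \<or> pre (-h) M \<in> p \<or> pre h M \<in> p" using uf_UNIV[OF u] uf_Un[OF u] by metis
  then have "M \<in> p" using fixA[of M] fixA[of "pre (-h) M"] pre1 by auto
  moreover have "pre (-h) M \<in> p" using calculation fixA[of "pre (-h) M"] pre1 by simp
  ultimately have "{} \<in> p" using uf_Int[OF u] disj by metis
  then show False using uf_empty[OF u] by simp
qed

lemma lshift_inj:
  assumes u: "ultrafilter p"
  shows "inj (\<lambda>g. lshift g p)"
proof (rule injI)
  fix g g' assume e: "lshift g p = lshift g' p"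
  show "g = g'"
  proof (rule ccontr)
    assume ne: "g \<noteq> g'"
    have "lshift (-g') (lshift g p) = lshift (-g') (lshift g' p)" using e by simp
    then have "lshift (-g' + g) p = p" by (simp add: lshift_lshift lshift_zero)
    moreover have "-g' + g \<noteq> 0" using ne by (metis add_minus_cancel add.right_neutral)
    ultimately show False using lshift_fix[OF u] by blast
  qed
qed

lemma psFP_mem: "l \<noteq> [] \<Longrightarrow> sorted_wrt (<) l \<Longrightarrow> sum_list (map g l) + b (last l) \<in> psFP g b"
  unfolding psFP_def by blast

lemma psFP_infinite:
  assumes g: "inj (g :: nat \<Rightarrow> 'a::group_add)"
  shows "infinite (psFP g b)"
proof
  assume fin: "finite (psFP g b)"
  let ?n = "Suc (card (psFP g b))"
  let ?f = "\<lambda>m. g m + (g ?n + b ?n)"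
  have "?f ` {..<?n} \<subseteq> psFP g b"
  proof
    fix x assume "x \<in> ?f ` {..<?n}"
    then obtain m where m: "m < ?n" "x = ?f m" by blast
    have "sum_list (map g [m, ?n]) + b (last [m, ?n]) \<in> psFP g b"
      by (rule psFP_mem) (use m in auto)
    then show "x \<in> psFP g b" using m by (simp add: add.assoc)
  qed
  moreover have "inj_on ?f {..<?n}"
  proof (rule inj_onI)
    fix m m' assume "?f m = ?f m'"
    then have "g m = g m'" by (simp only: add_right_cancel)
    then show "m = m'" by (rule injD[OF g])
  qed
  ultimately have "card {..<?n} \<le> card (psFP g b)" by (intro card_inj_on_le[OF _ _ fin])
  then show False by simp
qed




definition rep :: "(nat \<Rightarrow> 'a::group_add) \<Rightarrow> (nat \<Rightarrow> 'a) \<Rightarrow> 'a \<Rightarrow> nat list" where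
  "rep g b x = (SOME l. l \<noteq> [] \<and> sorted_wrt (<) l \<and> x = sum_list (map g l) + b (last l))"

lemma rep_prop:
  assumes "x \<in> psFP g b"
  shows "rep g b x \<noteq> [] \<and> sorted_wrt (<) (rep g b x) \<and> x = sum_list (map g (rep g b x)) + b (last (rep g b x))"
proof -
  have "\<exists>l. l \<noteq> [] \<and> sorted_wrt (<) l \<and> x = sum_list (map g l) + b (last l)"
    using assms unfolding psFP_def by blast
  then show ?thesis unfolding rep_def by (rule someI_ex)
qed

lemma psFP_split:
  assumes "d \<noteq> []"
  shows "sum_list (map g (ms @ d)) + b (last (ms @ d)) = sum_list (map g ms) + (sum_list (map g d) + b (last d))"
  using assms by (simp add: add.assoc)

lemma psFP_split2:
  assumes "r = ms @ d" "x = sum_list (map g r) + b (last r)" "d \<noteq> []"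
  shows "x = sum_list (map g ms) + (sum_list (map g d) + b (last d))"
  using assms psFP_split by metis

lemma take_Suc_dec: "r = ms @ m # rest \<Longrightarrow> length ms = j \<Longrightarrow> take (Suc j) r = ms @ [m]"
  by simp

lemma take_decomp: "take k l = t \<Longrightarrow> l = t @ drop k l"
  by (metis append_take_drop_id)

lemma minus_left_eq: "x = a + y \<Longrightarrow> - a + x = (y::'a::group_add)"
  by (simp add: minus_add_cancel)

lemma sorted_drop: "sorted_wrt (<) l \<Longrightarrow> sorted_wrt (<) (drop k l)"
  by (metis append_take_drop_id sorted_wrt_append)

lemma peel_step:
  fixes g :: "nat \<Rightarrow> 'a::group_add"
  assumes g: "inj g" and p: "p \<in> Gstar"
    and T: "finite {h. pre (-h) (psFP g b) \<in> p}"
    and U: "{x \<in> psFP g b. take j (rep g b x) = ms \<and> j < length (rep g b x)} \<in> p"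
    and len: "length ms = j"
  shows "\<exists>m. {x \<in> psFP g b. take (Suc j) (rep g b x) = ms @ [m] \<and> Suc j < length (rep g b x)} \<in> p
           \<and> pre (- sum_list (map g (ms @ [m]))) (psFP g b) \<in> p"
proof -
  let ?X = "psFP g b"
  let ?U = "{x \<in> ?X. take j (rep g b x) = ms \<and> j < length (rep g b x)}"
  let ?P = "\<lambda>l. sum_list (map g l)"
  have up: "ultrafilter p" using p by (simp add: Gstar_def)
  define f where "f x = rep g b x ! j" for x
  have dec: "rep g b x = ms @ (f x # drop (Suc j) (rep g b x))" if "x \<in> ?U" for x
  proof -
    have "rep g b x = take j (rep g b x) @ drop j (rep g b x)" by simp
    moreover have "drop j (rep g b x) = f x # drop (Suc j) (rep g b x)"
      unfolding f_def using that by (simp add: Cons_nth_drop_Suc)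
    ultimately show ?thesis using that by simp
  qed
  have xdec: "x = ?P ms + (?P (f x # drop (Suc j) (rep g b x)) + b (last (f x # drop (Suc j) (rep g b x))))"
    and sd: "sorted_wrt (<) (f x # drop (Suc j) (rep g b x))" if "x \<in> ?U" for x
  proof -
    have r: "rep g b x \<noteq> [] \<and> sorted_wrt (<) (rep g b x) \<and> x = ?P (rep g b x) + b (last (rep g b x))"
      using rep_prop that by blast
    show "x = ?P ms + (?P (f x # drop (Suc j) (rep g b x)) + b (last (f x # drop (Suc j) (rep g b x))))"
      by (rule psFP_split2[OF dec[OF that]]) (use r in auto)
    have "sorted_wrt (<) (drop j (rep g b x))" using r sorted_drop by blast
    moreover have "drop j (rep g b x) = f x # drop (Suc j) (rep g b x)"
      using dec[OF that] len by (metis append_eq_conv_conj)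
    ultimately show "sorted_wrt (<) (f x # drop (Suc j) (rep g b x))" by simp
  qed
  show ?thesis
  proof (cases "\<exists>m. {x \<in> ?U. f x = m} \<in> p")
    case True
    then obtain m where m: "{x \<in> ?U. f x = m} \<in> p" by blast
    let ?U' = "{x \<in> ?X. take (Suc j) (rep g b x) = ms @ [m] \<and> Suc j < length (rep g b x)}"
    let ?c = "?P (ms @ [m]) + b m"
    have "{x \<in> ?U. f x = m} \<subseteq> ?U' \<union> {?c}"
    proof
      fix x assume x: "x \<in> {x \<in> ?U. f x = m}"
      then have xU: "x \<in> ?U" and fx: "f x = m" by auto
      have tk: "take (Suc j) (rep g b x) = ms @ [m]"
        using take_Suc_dec[OF dec[OF xU] len] fx by simp
      show "x \<in> ?U' \<union> {?c}"
      proof (cases "Suc j < length (rep g b x)")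
        case True then show ?thesis using tk xU by blast
      next
        case False
        then have "length (rep g b x) = Suc j" using xU by simp
        then have "take (Suc j) (rep g b x) = rep g b x" by simp
        then have "rep g b x = ms @ [m]" using tk by simp
        moreover have "x = ?P (rep g b x) + b (last (rep g b x))" using rep_prop xU by blast
        ultimately show ?thesis by simp
      qed
    qed
    then have "?U' \<union> {?c} \<in> p" using uf_mono[OF up m] by blast
    moreover have "{?c} \<notin> p" using p by (simp add: Gstar_def)
    ultimately have U'p: "?U' \<in> p" using uf_Un[OF up] by blast
    have "?U' \<subseteq> pre (- ?P (ms @ [m])) ?X"
    proof
      fix x assume x: "x \<in> ?U'"
      let ?l = "rep g b x"
      let ?d = "drop (Suc j) ?l"
      have r: "?l \<noteq> [] \<and> sorted_wrt (<) ?l \<and> x = ?P ?l + b (last ?l)" using rep_prop x by blast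
      have l: "?l = (ms @ [m]) @ ?d" using x by (intro take_decomp) simp
      have dne: "?d \<noteq> []" using x by simp
      have "x = ?P (ms @ [m]) + (?P ?d + b (last ?d))"
        by (rule psFP_split2[OF l _ dne]) (use r in blast)
      then have "- ?P (ms @ [m]) + x = ?P ?d + b (last ?d)" by (rule minus_left_eq)
      moreover have "?P ?d + b (last ?d) \<in> ?X" using dne sorted_drop r by (intro psFP_mem) auto
      ultimately show "x \<in> pre (- ?P (ms @ [m])) ?X" by simp
    qed
    then have "pre (- ?P (ms @ [m])) ?X \<in> p" using uf_mono[OF up U'p] by blast
    then show ?thesis using U'p by blast
  next
    case False
    then have nm: "{x \<in> ?U. f x = m} \<notin> p" for m by blast
    have V: "{x \<in> ?U. n < f x} \<in> p" for n
    proof -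
      have "(\<lambda>m. - {x \<in> ?U. f x = m}) ` {..n} \<subseteq> p" using nm uf_Compl[OF up] by blast
      then have "\<Inter>((\<lambda>m. - {x \<in> ?U. f x = m}) ` {..n}) \<in> p" using uf_finite_Inter[OF up] by blast
      then have "?U \<inter> \<Inter>((\<lambda>m. - {x \<in> ?U. f x = m}) ` {..n}) \<in> p" using uf_Int[OF up U] by blast
      moreover have "?U \<inter> \<Inter>((\<lambda>m. - {x \<in> ?U. f x = m}) ` {..n}) \<subseteq> {x \<in> ?U. n < f x}"
        by (auto simp: not_less)
      ultimately show ?thesis using uf_mono[OF up] by blast
    qed
    have hin: "?P ms + - g n \<in> {h. pre (-h) ?X \<in> p}" for n
    proof -
      have "{x \<in> ?U. n < f x} \<subseteq> pre (- (?P ms + - g n)) ?X"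
      proof
        fix x assume x: "x \<in> {x \<in> ?U. n < f x}"
        then have xU: "x \<in> ?U" and nf: "n < f x" by auto
        let ?d = "f x # drop (Suc j) (rep g b x)"
        have "- (?P ms + - g n) + x = g n + (- ?P ms + x)" by (simp only: minus_add minus_minus add.assoc)
        also have "- ?P ms + x = ?P ?d + b (last ?d)" by (rule minus_left_eq[OF xdec[OF xU]])
        finally have e: "- (?P ms + - g n) + x = ?P (n # ?d) + b (last (n # ?d))" by (simp add: add.assoc)
        have "sorted_wrt (<) (n # ?d)" using sd[OF xU] nf by auto
        then have "?P (n # ?d) + b (last (n # ?d)) \<in> ?X" by (intro psFP_mem) auto
        then show "x \<in> pre (- (?P ms + - g n)) ?X" using e by simp
      qed
      then show ?thesis using uf_mono[OF up V] by blast
    qed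
    have "inj (\<lambda>n. ?P ms + - g n)"
    proof (rule injI)
      fix n n' assume "?P ms + - g n = ?P ms + - g n'"
      then have "g n = g n'" by (simp only: add_left_cancel neg_equal_iff_equal)
      then show "n = n'" by (rule injD[OF g])
    qed
    then have "infinite (range (\<lambda>n. ?P ms + - g n))"
      using finite_imageD[of "\<lambda>n. ?P ms + - g n" "UNIV :: nat set"] by auto
    moreover have "range (\<lambda>n. ?P ms + - g n) \<subseteq> {h. pre (-h) ?X \<in> p}" using hin by blast
    ultimately show ?thesis using T finite_subset by blast
  qed
qed

lemma peel_claim:
  fixes g :: "nat \<Rightarrow> 'a::group_add"
  assumes g: "inj g" and p: "p \<in> Gstar" and X: "psFP g b \<in> p"
    and T: "finite {h. pre (-h) (psFP g b) \<in> p}"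
  shows "\<exists>ms. length ms = j \<and> {x \<in> psFP g b. take j (rep g b x) = ms \<and> j < length (rep g b x)} \<in> p
     \<and> (\<forall>i\<le>j. pre (- sum_list (map g (take i ms))) (psFP g b) \<in> p)"
proof (induction j)
  case 0
  have "{x \<in> psFP g b. take 0 (rep g b x) = [] \<and> 0 < length (rep g b x)} = psFP g b"
    using rep_prop by fastforce
  then show ?case using X by (intro exI[of _ "[]"]) simp
next
  case (Suc j)
  then obtain ms where ms: "length ms = j"
    "{x \<in> psFP g b. take j (rep g b x) = ms \<and> j < length (rep g b x)} \<in> p"
    "\<forall>i\<le>j. pre (- sum_list (map g (take i ms))) (psFP g b) \<in> p" by blast
  obtain m where m: "{x \<in> psFP g b. take (Suc j) (rep g b x) = ms @ [m] \<and> Suc j < length (rep g b x)} \<in> p"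
    "pre (- sum_list (map g (ms @ [m]))) (psFP g b) \<in> p"
    using peel_step[OF g p T ms(2) ms(1)] by blast
  have "\<forall>i\<le>Suc j. pre (- sum_list (map g (take i (ms @ [m])))) (psFP g b) \<in> p"
  proof (intro allI impI)
    fix i assume i: "i \<le> Suc j"
    show "pre (- sum_list (map g (take i (ms @ [m])))) (psFP g b) \<in> p"
    proof (cases "i = Suc j")
      case True then show ?thesis using m(2) ms(1) by simp
    next
      case False
      then have "i \<le> j" using i by simp
      then have "take i (ms @ [m]) = take i ms" using ms(1) by simp
      then show ?thesis using ms(3) \<open>i \<le> j\<close> by simp
    qed
  qed
  then show ?case using m(1) ms(1) by (intro exI[of _ "ms @ [m]"]) simp
qed

lemma peel_infinite:
  fixes g :: "nat \<Rightarrow> 'a::group_add"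
  assumes g: "inj g" and p: "p \<in> Gstar" and X: "psFP g b \<in> p"
  shows "infinite {h. pre (-h) (psFP g b) \<in> p}"
proof
  let ?T = "{h. pre (-h) (psFP g b) \<in> p}"
  let ?P = "\<lambda>l. sum_list (map g l)"
  assume T: "finite ?T"
  have up: "ultrafilter p" using p by (simp add: Gstar_def)
  define j where "j = Suc (card ?T * card ?T)"
  obtain ms where ms: "length ms = j"
    "{x \<in> psFP g b. take j (rep g b x) = ms \<and> j < length (rep g b x)} \<in> p"
    "\<forall>i\<le>j. ?P (take i ms) \<in> ?T"
    using peel_claim[OF g p X T, of j] by auto
  obtain x where x: "x \<in> psFP g b" "take j (rep g b x) = ms"
    using uf_nonempty[OF up ms(2)] by blast
  have "distinct ms" using rep_prop[OF x(1)] x(2) strict_sorted_iff by (metis distinct_take)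
  define D where "D i = - ?P (take i ms) + ?P (take (Suc i) ms)" for i
  have Dg: "D i = g (ms ! i)" if "i < j" for i
  proof -
    have "take (Suc i) ms = take i ms @ [ms ! i]" using that ms(1) by (simp add: take_Suc_conv_app_nth)
    then show ?thesis unfolding D_def by (simp add: minus_add_cancel)
  qed
  have "inj_on D {..<j}"
  proof (rule inj_onI)
    fix i i' assume ii: "i \<in> {..<j}" "i' \<in> {..<j}" "D i = D i'"
    then have "g (ms ! i) = g (ms ! i')" using Dg by simp
    then have "ms ! i = ms ! i'" by (rule injD[OF g])
    then show "i = i'" using ii \<open>distinct ms\<close> ms(1) nth_eq_iff_index_eq by auto
  qed
  then have c1: "card (D ` {..<j}) = j" by (simp add: card_image)
  have "D ` {..<j} \<subseteq> (\<lambda>(a, c). - a + c) ` (?T \<times> ?T)"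
  proof
    fix y assume "y \<in> D ` {..<j}"
    then obtain i where i: "i < j" "y = D i" by blast
    have "?P (take i ms) \<in> ?T" "?P (take (Suc i) ms) \<in> ?T" using ms(3) i by auto
    then show "y \<in> (\<lambda>(a, c). - a + c) ` (?T \<times> ?T)" unfolding i(2) D_def by force
  qed
  then have "card (D ` {..<j}) \<le> card ((\<lambda>(a, c). - a + c) ` (?T \<times> ?T))"
    using T by (intro card_mono) auto
  also have "\<dots> \<le> card (?T \<times> ?T)" using T by (intro card_image_le) auto
  also have "\<dots> = card ?T * card ?T" by (simp add: card_cartesian_product)
  finally show False using c1 unfolding j_def by simp
qed

lemma psFP_not_scattered:
  fixes g :: "nat \<Rightarrow> 'a::group_add"
  assumes g: "inj g" and A: "psFP g b \<subseteq> A"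
  shows "\<not> scattered A"
proof
  assume "scattered A"
  then obtain p where p: "p \<in> Xstar (psFP g b)" "finite (Delta p (psFP g b))"
    using A psFP_infinite[OF g] unfolding scattered_def by blast
  have pG: "p \<in> Gstar" and Xp: "psFP g b \<in> p" using p by (auto simp: Xstar_def)
  have up: "ultrafilter p" using pG by (simp add: Gstar_def)
  let ?T = "{h. pre h (psFP g b) \<in> p}"
  have "finite ((\<lambda>h. lshift h p) ` ?T)" using p(2) unfolding Delta_eq .
  moreover have "inj_on (\<lambda>h. lshift h p) ?T" using lshift_inj[OF up] by (simp add: inj_on_def inj_eq)
  ultimately have "finite ?T" by (rule finite_imageD)
  then have "finite (uminus ` ?T)" by simp
  moreover have "uminus ` ?T = {h. pre (-h) (psFP g b) \<in> p}"
    by (auto simp: image_iff) (metis minus_minus)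
  ultimately show False using peel_infinite[OF g pG Xp] by simp
qed




lemma C_ns:
  assumes "idempotent_star e" "q \<in> betaG" "A \<in> umult e q"
  shows "\<not> scattered A"
proof -
  have "config A" using C_config[OF assms] .
  then obtain S where S: "is_psFP S" "S \<subseteq> A" using config_psFP by blast
  then obtain g :: "nat \<Rightarrow> 'a" and b where "inj g" "S = psFP g b" unfolding is_psFP_def by blast
  then show ?thesis using psFP_not_scattered S(2) by blast
qed

lemma NS_iff_C: "\<not> scattered A \<longleftrightarrow> (\<exists>e q. idempotent_star e \<and> q \<in> betaG \<and> A \<in> umult e q)"
  using ns_C C_ns by blast

lemma NS_iff_B: "\<not> scattered A \<longleftrightarrow> (\<exists>S. is_psFP S \<and> S \<subseteq> A)"
proof
  assume "\<not> scattered A"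
  then obtain e q where "idempotent_star e" "q \<in> betaG" "A \<in> umult e q" using ns_C by blast
  then have "config A" by (rule C_config)
  then show "\<exists>S. is_psFP S \<and> S \<subseteq> A" by (rule config_psFP)
next
  assume "\<exists>S. is_psFP S \<and> S \<subseteq> A"
  then obtain g :: "nat \<Rightarrow> 'a" and b where "inj g" "psFP g b \<subseteq> A" unfolding is_psFP_def by blast
  then show "\<not> scattered A" by (rule psFP_not_scattered)
qed

lemma ScHat_iff: "p \<in> ScHat \<longleftrightarrow> p \<in> betaG \<and> (\<forall>A\<in>p. \<not> scattered A)"
proof
  assume p: "p \<in> ScHat"
  then have pb: "p \<in> betaG" and c: "\<forall>A. scattered A \<longrightarrow> - A \<in> p" by (auto simp: ScHat_def)
  have u: "ultrafilter p" using pb by (simp add: betaG_def)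
  have "\<not> scattered A" if "A \<in> p" for A
  proof
    assume "scattered A"
    then have "-A \<in> p" using c by blast
    then show False using that uf_Compl[OF u] by blast
  qed
  then show "p \<in> betaG \<and> (\<forall>A\<in>p. \<not> scattered A)" using pb by blast
next
  assume p: "p \<in> betaG \<and> (\<forall>A\<in>p. \<not> scattered A)"
  have u: "ultrafilter p" using p by (simp add: betaG_def)
  have "- A \<in> p" if "scattered A" for A
  proof (rule ccontr)
    assume "- A \<notin> p"
    then have "A \<in> p" using uf_Compl[OF u] by blast
    then show False using p that by blast
  qed
  then show "p \<in> ScHat" using p by (simp add: ScHat_def)
qed

lemma idem_uf: "idempotent_star e \<Longrightarrow> ultrafilter e"
  by (simp add: idempotent_star_def Gstar_def)

lemma EB_sub_ScHat:
  "{umult e p | e p. idempotent_star e \<and> p \<in> betaG} \<subseteq> ScHat"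
proof
  fix s assume "s \<in> {umult e p | e p. idempotent_star e \<and> p \<in> betaG}"
  then obtain e p where ep: "idempotent_star e" "p \<in> betaG" "s = umult e p" by blast
  have "s \<in> betaG" using ep idem_uf umult_uf by (auto simp: betaG_def)
  moreover have "\<forall>A\<in>s. \<not> scattered A" using ep C_ns by blast
  ultimately show "s \<in> ScHat" using ScHat_iff by blast
qed

lemma ScHat_eq_bcl:
  "ScHat = bcl {umult e p | e p. idempotent_star e \<and> p \<in> betaG}"
proof
  show "ScHat \<subseteq> bcl {umult e p | e p. idempotent_star e \<and> p \<in> betaG}"
  proof
    fix p assume p: "p \<in> ScHat"
    then have pb: "p \<in> betaG" and ns: "\<forall>A\<in>p. \<not> scattered A" using ScHat_iff by auto
    have "\<exists>s\<in>{umult e p | e p. idempotent_star e \<and> p \<in> betaG}. A \<in> s" if "A \<in> p" for A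
    proof -
      have "\<not> scattered A" using ns that by blast
      then obtain e q where eq: "idempotent_star e" "q \<in> betaG" "A \<in> umult e q" using ns_C by blast
      have "\<exists>e' p'. umult e q = umult e' p' \<and> idempotent_star e' \<and> p' \<in> betaG" using eq(1,2) by blast
      then have "umult e q \<in> {umult e p | e p. idempotent_star e \<and> p \<in> betaG}" by simp
      then show ?thesis using eq(3) by (rule bexI[rotated])
    qed
    then show "p \<in> bcl {umult e p | e p. idempotent_star e \<and> p \<in> betaG}" using pb by (simp add: bcl_def)
  qed
next
  show "bcl {umult e p | e p. idempotent_star e \<and> p \<in> betaG} \<subseteq> ScHat"
  proof
    fix p assume p: "p \<in> bcl {umult e p | e p. idempotent_star e \<and> p \<in> betaG}"
    have "\<not> scattered A" if Ap: "A \<in> p" for A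
    proof -
      have all: "\<forall>A\<in>p. \<exists>s\<in>{umult e p | e p. idempotent_star e \<and> p \<in> betaG}. A \<in> s"
        using p unfolding bcl_def by simp
      have "\<exists>s\<in>{umult e p | e p. idempotent_star e \<and> p \<in> betaG}. A \<in> s" using all Ap by (rule bspec)
      then obtain s where s: "s \<in> {umult e p | e p. idempotent_star e \<and> p \<in> betaG}" "A \<in> s"
        by (rule bexE)
      from s(1) have "\<exists>e q. s = umult e q \<and> idempotent_star e \<and> q \<in> betaG" by simp
      then obtain e q where eq: "s = umult e q" "idempotent_star e" "q \<in> betaG" by (elim exE conjE)
      have "A \<in> umult e q" using s(2) eq(1) by simp
      then show ?thesis by (rule C_ns[OF eq(2) eq(3)])
    qed
    moreover have "p \<in> betaG" using p bcl_betaG by blast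
    ultimately show "p \<in> ScHat" using ScHat_iff by blast
  qed
qed

lemma sum_list_conj': "sum_list (map (\<lambda>n. x + g n + - x) l) = x + sum_list (map g l) + - (x::'a::group_add)"
  by (rule sum_list_conj)

lemma NS_translate:
  assumes "\<not> scattered (pre x A)"
  shows "\<not> scattered A"
proof -
  obtain g :: "nat \<Rightarrow> 'a" and b where g: "inj g" and S: "psFP g b \<subseteq> pre x A"
    using assms unfolding NS_iff_B is_psFP_def by blast
  define g' where "g' n = x + g n + - x" for n
  define b' where "b' n = x + b n" for n
  have "psFP g' b' \<subseteq> A"
  proof
    fix y assume "y \<in> psFP g' b'"
    then obtain l where l: "l \<noteq> []" "sorted_wrt (<) l" "y = sum_list (map g' l) + b' (last l)"
      unfolding psFP_def by blast
    have "sum_list (map g' l) = x + sum_list (map g l) + - x" unfolding g'_def by (rule sum_list_conj)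
    then have "y = x + (sum_list (map g l) + b (last l))" using l(3) unfolding b'_def
      by (simp only: add.assoc minus_add_cancel)
    moreover have "sum_list (map g l) + b (last l) \<in> psFP g b" by (rule psFP_mem[OF l(1) l(2)])
    ultimately show "y \<in> A" using S by auto
  qed
  moreover have "inj g'"
  proof (rule injI)
    fix i j assume "g' i = g' j"
    then have "x + g i + - x = x + g j + - x" unfolding g'_def .
    then have "g i = g j" by (simp only: add_right_cancel add_left_cancel)
    then show "i = j" by (rule injD[OF g])
  qed
  ultimately show ?thesis using psFP_not_scattered by blast
qed

lemma ScHat_ideal:
  assumes inf: "infinite (UNIV :: 'a::group_add set)"
  shows "bideal (ScHat :: 'a set set set)"
  unfolding bideal_def
proof (intro conjI ballI)
  obtain e :: "'a set set" where e: "idempotent_star e" using idempotent_exists[OF inf] by blast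
  have "e \<in> betaG" using idem_uf[OF e] by (simp add: betaG_def)
  then have "umult e e \<in> ScHat" using EB_sub_ScHat e by blast
  then show "(ScHat :: 'a set set set) \<noteq> {}" by blast
  show "(ScHat :: 'a set set set) \<subseteq> betaG" by (auto simp: ScHat_def)
next
  fix p q :: "'a set set" assume p: "p \<in> ScHat" and q: "q \<in> betaG"
  have pb: "p \<in> betaG" and pns: "\<forall>A\<in>p. \<not> scattered A" using p ScHat_iff by auto
  have up: "ultrafilter p" and uq: "ultrafilter q" using pb q by (auto simp: betaG_def)
  show "umult p q \<in> ScHat"
  proof -
    have "\<not> scattered A" if A: "A \<in> umult p q" for A
    proof -
      have "{x. pre x A \<in> q} \<in> p" using A umult_iff[OF up uq] by simp
      then obtain e r where er: "idempotent_star e" "r \<in> betaG" "{x. pre x A \<in> q} \<in> umult e r"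
        using pns ns_C by blast
      have ue: "ultrafilter e" and ur: "ultrafilter r" using er idem_uf by (auto simp: betaG_def)
      have uer: "ultrafilter (umult e r)" using umult_uf[OF ue ur] .
      have "A \<in> umult (umult e r) q" using umult_iff[OF uer uq] er(3) by simp
      then have "A \<in> umult e (umult r q)" using umult_assoc[OF ue ur uq] by simp
      moreover have "umult r q \<in> betaG" using umult_uf[OF ur uq] by (simp add: betaG_def)
      ultimately show ?thesis using C_ns er(1) by blast
    qed
    moreover have "umult p q \<in> betaG" using umult_uf[OF up uq] by (simp add: betaG_def)
    ultimately show ?thesis using ScHat_iff by blast
  qed
  show "umult q p \<in> ScHat"
  proof -
    have "\<not> scattered A" if A: "A \<in> umult q p" for A
    proof -
      have "{x. pre x A \<in> p} \<in> q" using A umult_iff[OF uq up] by simp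
      then obtain x where "pre x A \<in> p" using uf_nonempty[OF uq] by blast
      then have "\<not> scattered (pre x A)" using pns by blast
      then show ?thesis by (rule NS_translate)
    qed
    moreover have "umult q p \<in> betaG" using umult_uf[OF uq up] by (simp add: betaG_def)
    ultimately show ?thesis using ScHat_iff by blast
  qed
qed

theorem theorem6p8:
  assumes "infinite (UNIV :: 'a::group_add set)"
  shows "(ScHat :: 'a set set set) =
           bcl {umult e p | e p. idempotent_star e \<and> p \<in> betaG}
       \<and> (bideal (ScHat :: 'a set set set)
          \<and> (\<forall>p :: 'a set set. p \<in> betaG \<longrightarrow>
               (p \<in> ScHat \<longleftrightarrow> (\<forall>P\<in>p. \<exists>S. is_psFP S \<and> S \<subseteq> P))))
       \<and> (bclosed (ScHat :: 'a set set set) \<and> bideal (ScHat :: 'a set set set)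
           \<and> {e. idempotent_star e} \<subseteq> (ScHat :: 'a set set set)
           \<and> (\<forall>I :: 'a set set set. bclosed I \<and> bideal I \<and> {e. idempotent_star e} \<subseteq> I
                \<longrightarrow> ScHat \<subseteq> I))"
proof (intro conjI allI impI)
  show "(ScHat :: 'a set set set) = bcl {umult e p | e p. idempotent_star e \<and> p \<in> betaG}"
    by (rule ScHat_eq_bcl)
  show "bideal (ScHat :: 'a set set set)" using ScHat_ideal[OF assms] .
  show "bideal (ScHat :: 'a set set set)" using ScHat_ideal[OF assms] .
next
  fix p :: "'a set set" assume pb: "p \<in> betaG"
  show "p \<in> ScHat \<longleftrightarrow> (\<forall>P\<in>p. \<exists>S. is_psFP S \<and> S \<subseteq> P)"
  proof -
    have "p \<in> ScHat \<longleftrightarrow> (\<forall>A\<in>p. \<not> scattered A)" using pb by (simp add: ScHat_iff)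
    also have "\<dots> \<longleftrightarrow> (\<forall>P\<in>p. \<exists>S. is_psFP S \<and> S \<subseteq> P)" by (simp only: NS_iff_B)
    finally show ?thesis .
  qed
next
  show "bclosed (ScHat :: 'a set set set)"
  proof (rule bclosedI)
    show "(ScHat :: 'a set set set) \<subseteq> betaG" by (auto simp: ScHat_def)
    show "bcl (ScHat :: 'a set set set) \<subseteq> ScHat"
    proof
      fix p :: "'a set set" assume p: "p \<in> bcl ScHat"
      have "\<not> scattered A" if Ap: "A \<in> p" for A
      proof -
        have "\<forall>A\<in>p. \<exists>s\<in>ScHat. A \<in> s" using p unfolding bcl_def by simp
        then have "\<exists>s\<in>ScHat. A \<in> s" using Ap by (rule bspec)
        then obtain s where s: "s \<in> ScHat" "A \<in> s" by (rule bexE)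
        have "\<forall>A\<in>s. \<not> scattered A" using s(1) ScHat_iff by blast
        then show ?thesis using s(2) by blast
      qed
      moreover have "p \<in> betaG" using p bcl_betaG by blast
      ultimately show "p \<in> ScHat" using ScHat_iff by blast
    qed
  qed
next
  show "{e. idempotent_star e} \<subseteq> (ScHat :: 'a set set set)"
  proof
    fix e :: "'a set set" assume e: "e \<in> {e. idempotent_star e}"
    then have ie: "idempotent_star e" by simp
    have "e \<in> betaG" using idem_uf[OF ie] by (simp add: betaG_def)
    then have "umult e e \<in> ScHat" using EB_sub_ScHat ie by blast
    moreover have "umult e e = e" using ie by (simp add: idempotent_star_def)
    ultimately show "e \<in> ScHat" by simp
  qed
next
  fix I :: "'a set set set"
  assume I: "bclosed I \<and> bideal I \<and> {e. idempotent_star e} \<subseteq> I"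
  have "{umult e p | e p. idempotent_star e \<and> p \<in> betaG} \<subseteq> I"
  proof
    fix s :: "'a set set" assume "s \<in> {umult e p | e p. idempotent_star e \<and> p \<in> betaG}"
    then have "\<exists>e p. s = umult e p \<and> idempotent_star e \<and> p \<in> betaG" by simp
    then obtain e p where ep: "idempotent_star e" "p \<in> betaG" "s = umult e p" by blast
    have "e \<in> I" using I ep by blast
    have "\<forall>p\<in>I. \<forall>q\<in>betaG. umult p q \<in> I \<and> umult q p \<in> I" using I unfolding bideal_def by blast
    then show "s \<in> I" using \<open>e \<in> I\<close> ep by blast
  qed
  then have "bcl {umult e p | e p. idempotent_star e \<and> p \<in> betaG} \<subseteq> bcl I" by (rule bcl_mono)
  moreover have "bcl I = I" using I bclosed_bcl by blast
  moreover have "(ScHat :: 'a set set set) = bcl {umult e p | e p. idempotent_star e \<and> p \<in> betaG}"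
    by (rule ScHat_eq_bcl)
  ultimately show "ScHat \<subseteq> I" by simp
qed


end
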